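(* Let $V$ be a finite-dimensional real vector space and $X\subseteq V$ a finite or countable set in which every $2$-dimensional linear subset has fundamental vectors, equipped with a suitable ordering $\gamma_1,\gamma_2,\ldots$ with initial segments $X_i=\{\gamma_1,\ldots,\gamma_i\}$. Let $X_m$ be an initial segment and let $U$ be biclosed in $X_m$. Let $\overline{U}$ be the closure of $U$ in $X$. Then $\overline{U}\cap X_m=U$.
   Context: $\mathrm{Span}_+$ denotes nonnegative linear combinations. For $Y\subseteq X$, $B\subseteq Y$: closed in $Y$ if $\alpha,\beta\in B$, $\gamma\in\mathrm{Span}_+(\alpha,\beta)\cap Y$ imply $\gamma\in B$; coclosed if $Y\setminus B$ closed; biclosed if both; weakly separable if $\mathrm{Span}_+(B)\cap\mathrm{Span}_+(Y\setminus B)=\{0\}$; $Y$ is clean if every biclosed subset of $Y$ is weakly separable in $Y$. The closure of $U$ in $X$ is the smallest closed subset of $X$ containing $U$. A linear subset is $X\cap L$ for a subspace $L$. A $2$-dimensional linear subset $Y$ has fundamental vectors $\alpha,\beta\in Y$ if $Y\subseteq\mathrm{Span}_+\{\alpha,\beta\}$ and neither $\alpha$ nor $\beta$ lies in the nonnegative span of the other elements of $Y$. $F\subseteq X$ is full if $F\cap\mathrm{Span}\{\alpha,\beta\}=X\cap\mathrm{Span}\{\alpha,\beta\}$ for all $\alpha,\beta\in F$. An ordering is suitable if (1) in every $2$-dimensional linear subset the fundamental vectors precede all its other vectors, and (2) for every $i$ and $\alpha,\beta,\gamma\in X_i$ there is a full $F\subseteq X$ containing them with $F\cap X_i$ clean.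 *)

theory Defs
  imports "HOL-Analysis.Analysis"
begin

definition nonneg_span :: "'a::real_vector set \<Rightarrow> 'a set" where
  "nonneg_span S = {x. \<exists>F c. finite F \<and> F \<subseteq> S \<and> (\<forall>v\<in>F. 0 \<le> c v) \<and> x = (\<Sum>v\<in>F. c v *\<^sub>R v)}"

definition closed_sub :: "'a::real_vector set \<Rightarrow> 'a set \<Rightarrow> bool" where
  "closed_sub Y B \<longleftrightarrow> B \<subseteq> Y \<and>
     (\<forall>\<alpha>\<in>B. \<forall>\<beta>\<in>B. \<forall>\<gamma>\<in>nonneg_span {\<alpha>, \<beta>} \<inter> Y. \<gamma> \<in> B)"

definition coclosed_sub :: "'a::real_vector set \<Rightarrow> 'a set \<Rightarrow> bool" where
  "coclosed_sub Y B \<longleftrightarrow> B \<subseteq> Y \<and> closed_sub Y (Y - B)"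

definition biclosed_sub :: "'a::real_vector set \<Rightarrow> 'a set \<Rightarrow> bool" where
  "biclosed_sub Y B \<longleftrightarrow> closed_sub Y B \<and> coclosed_sub Y B"

definition weakly_separable :: "'a::real_vector set \<Rightarrow> 'a set \<Rightarrow> bool" where
  "weakly_separable Y B \<longleftrightarrow> nonneg_span B \<inter> nonneg_span (Y - B) = {0}"

definition clean :: "'a::real_vector set \<Rightarrow> bool" where
  "clean Y \<longleftrightarrow> (\<forall>B. B \<subseteq> Y \<longrightarrow> biclosed_sub Y B \<longrightarrow> weakly_separable Y B)"

text \<open>Closure of U in X: the smallest closed subset of X containing U
  (closed subsets are stable under intersection, so this is the intersection of all of them).\<close>
definition closure_in :: "'a::real_vector set \<Rightarrow> 'a set \<Rightarrow> 'a set" where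
  "closure_in X U = \<Inter>{C. C \<subseteq> X \<and> closed_sub X C \<and> U \<subseteq> C}"

definition linear_subset :: "'a::real_vector set \<Rightarrow> 'a set \<Rightarrow> bool" where
  "linear_subset X Y \<longleftrightarrow> (\<exists>L. subspace L \<and> Y = X \<inter> L)"

definition two_dim_linear_subset :: "'a::euclidean_space set \<Rightarrow> 'a set \<Rightarrow> bool" where
  "two_dim_linear_subset X Y \<longleftrightarrow> linear_subset X Y \<and> dim Y = 2"

definition fundamental :: "'a::real_vector set \<Rightarrow> 'a \<Rightarrow> 'a \<Rightarrow> bool" where
  "fundamental Y \<alpha> \<beta> \<longleftrightarrow> \<alpha> \<in> Y \<and> \<beta> \<in> Y \<and> Y \<subseteq> nonneg_span {\<alpha>, \<beta>} \<and>
     \<alpha> \<notin> nonneg_span (Y - {\<alpha>}) \<and> \<beta> \<notin> nonneg_span (Y - {\<beta>})"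

definition full :: "'a::real_vector set \<Rightarrow> 'a set \<Rightarrow> bool" where
  "full X F \<longleftrightarrow> F \<subseteq> X \<and> (\<forall>\<alpha>\<in>F. \<forall>\<beta>\<in>F. F \<inter> span {\<alpha>, \<beta>} = X \<inter> span {\<alpha>, \<beta>})"

text \<open>An ordering of X: g enumerates X injectively on a downward closed index set K
  (K = {..<n} if X is finite with n elements, K = UNIV if X is countably infinite).
  Index i (0-based) corresponds to gamma_(i+1); the initial segment X_i is g ` {..<i},
  defined for {..<i} \<subseteq> K.\<close>
definition ordering_of :: "'a set \<Rightarrow> (nat \<Rightarrow> 'a) \<Rightarrow> nat set \<Rightarrow> bool" where
  "ordering_of X g K \<longleftrightarrow> (\<forall>i\<in>K. \<forall>j<i. j \<in> K) \<and> inj_on g K \<and> g ` K = X"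

definition init_seg :: "(nat \<Rightarrow> 'a) \<Rightarrow> nat \<Rightarrow> 'a set" where
  "init_seg g i = g ` {..<i}"

definition suitable :: "'a::euclidean_space set \<Rightarrow> (nat \<Rightarrow> 'a) \<Rightarrow> nat set \<Rightarrow> bool" where
  "suitable X g K \<longleftrightarrow>
     (\<forall>Y \<alpha> \<beta>. two_dim_linear_subset X Y \<and> fundamental Y \<alpha> \<beta> \<longrightarrow>
        (\<forall>i\<in>K. \<forall>j\<in>K. g i \<in> {\<alpha>, \<beta>} \<and> g j \<in> Y - {\<alpha>, \<beta>} \<longrightarrow> i < j)) \<and>
     (\<forall>i. {..<i} \<subseteq> K \<longrightarrow>
        (\<forall>\<alpha>\<in>init_seg g i. \<forall>\<beta>\<in>init_seg g i. \<forall>\<gamma>\<in>init_seg g i.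
           \<exists>F. full X F \<and> \<alpha> \<in> F \<and> \<beta> \<in> F \<and> \<gamma> \<in> F \<and> clean (F \<inter> init_seg g i)))"

end

theory Submission
  imports Defs
begin


lemma nn_zero: "0 \<in> nonneg_span S"
  unfolding nonneg_span_def by (rule CollectI, rule exI[of _ "{}"]) auto

lemma nn_base: "x \<in> S \<Longrightarrow> x \<in> nonneg_span S"
  unfolding nonneg_span_def by (intro CollectI exI[of _ "{x}"] exI[of _ "\<lambda>_. 1"]) auto

lemma nn_mono: "S \<subseteq> T \<Longrightarrow> nonneg_span S \<subseteq> nonneg_span T"
  unfolding nonneg_span_def by blast

lemma nn_scale:
  assumes "x \<in> nonneg_span S" "0 \<le> a" shows "a *\<^sub>R x \<in> nonneg_span S"
proof -
  obtain F c where F: "finite F" "F \<subseteq> S" "\<forall>v\<in>F. 0 \<le> c v" "x = (\<Sum>v\<in>F. c v *\<^sub>R v)"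
    using assms(1) unfolding nonneg_span_def by blast
  have "a *\<^sub>R x = (\<Sum>v\<in>F. (a * c v) *\<^sub>R v)"
    using F(4) by (simp add: scaleR_sum_right)
  then show ?thesis unfolding nonneg_span_def using F assms(2)
    by (intro CollectI exI[of _ F] exI[of _ "\<lambda>v. a * c v"]) auto
qed

lemma nn_add:
  assumes "x \<in> nonneg_span S" "y \<in> nonneg_span S" shows "x + y \<in> nonneg_span S"
proof -
  obtain F1 c1 where F1: "finite F1" "F1 \<subseteq> S" "\<forall>v\<in>F1. 0 \<le> c1 v" "x = (\<Sum>v\<in>F1. c1 v *\<^sub>R v)"
    using assms(1) unfolding nonneg_span_def by blast
  obtain F2 c2 where F2: "finite F2" "F2 \<subseteq> S" "\<forall>v\<in>F2. 0 \<le> c2 v" "y = (\<Sum>v\<in>F2. c2 v *\<^sub>R v)"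
    using assms(2) unfolding nonneg_span_def by blast
  define d1 where "d1 v = (if v \<in> F1 then c1 v else 0)" for v
  define d2 where "d2 v = (if v \<in> F2 then c2 v else 0)" for v
  have e1: "(\<Sum>v\<in>F1 \<union> F2. d1 v *\<^sub>R v) = x"
    unfolding F1(4) by (rule sum.mono_neutral_cong_right) (auto simp: F1 F2 d1_def)
  have e2: "(\<Sum>v\<in>F1 \<union> F2. d2 v *\<^sub>R v) = y"
    unfolding F2(4) by (rule sum.mono_neutral_cong_right) (auto simp: F1 F2 d2_def)
  have "x + y = (\<Sum>v\<in>F1 \<union> F2. (d1 v + d2 v) *\<^sub>R v)"
    using e1 e2 by (simp add: scaleR_add_left sum.distrib)
  moreover have "\<forall>v\<in>F1 \<union> F2. 0 \<le> d1 v + d2 v" using F1(3) F2(3) by (auto simp: d1_def d2_def)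
  ultimately show ?thesis unfolding nonneg_span_def using F1 F2
    by (intro CollectI exI[of _ "F1 \<union> F2"] exI[of _ "\<lambda>v. d1 v + d2 v"]) auto
qed

lemma nn2:
  "x \<in> nonneg_span {a, b} \<longleftrightarrow> (\<exists>c d. 0 \<le> c \<and> 0 \<le> d \<and> x = c *\<^sub>R a + d *\<^sub>R b)"
proof
  assume "x \<in> nonneg_span {a, b}"
  then obtain F c where F: "finite F" "F \<subseteq> {a,b}" "\<forall>v\<in>F. 0 \<le> c v" "x = (\<Sum>v\<in>F. c v *\<^sub>R v)"
    unfolding nonneg_span_def by blast
  define e where "e v = (if v \<in> F then c v else 0)" for v
  have "(\<Sum>v\<in>F. c v *\<^sub>R v) = (\<Sum>v\<in>{a,b}. e v *\<^sub>R v)"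
    by (rule sum.mono_neutral_cong_left) (auto simp: F e_def)
  then have x: "x = (\<Sum>v\<in>{a,b}. e v *\<^sub>R v)" using F(4) by simp
  show "\<exists>c d. 0 \<le> c \<and> 0 \<le> d \<and> x = c *\<^sub>R a + d *\<^sub>R b"
  proof (cases "a = b")
    case True
    then show ?thesis using x F(3) by (intro exI[of _ "e a"] exI[of _ 0]) (auto simp: e_def)
  next
    case False
    then show ?thesis using x F(3) by (intro exI[of _ "e a"] exI[of _ "e b"]) (auto simp: e_def)
  qed
next
  assume "\<exists>c d. 0 \<le> c \<and> 0 \<le> d \<and> x = c *\<^sub>R a + d *\<^sub>R b"
  then obtain c d where "0 \<le> c" "0 \<le> d" "x = c *\<^sub>R a + d *\<^sub>R b" by blast
  moreover have "c *\<^sub>R a \<in> nonneg_span {a, b}" by (rule nn_scale[OF nn_base]) (auto simp: \<open>0 \<le> c\<close>)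
  moreover have "d *\<^sub>R b \<in> nonneg_span {a, b}" by (rule nn_scale[OF nn_base]) (auto simp: \<open>0 \<le> d\<close>)
  ultimately show "x \<in> nonneg_span {a, b}" by (simp add: nn_add)
qed

lemma nn2_sub:
  assumes "x \<in> nonneg_span S" "y \<in> nonneg_span S" "z \<in> nonneg_span {x, y}"
  shows "z \<in> nonneg_span S"
  using assms nn2[of z x y] by (auto intro!: nn_add nn_scale)

lemma nn2_subset: "a \<in> S \<Longrightarrow> b \<in> S \<Longrightarrow> nonneg_span {a,b} \<subseteq> nonneg_span S"
  by (rule nn_mono) auto

lemma nn_span: "nonneg_span S \<subseteq> span S"
proof
  fix x assume "x \<in> nonneg_span S"
  then obtain F c where F: "finite F" "F \<subseteq> S" "x = (\<Sum>v\<in>F. c v *\<^sub>R v)"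
    unfolding nonneg_span_def by blast
  have "(\<Sum>v\<in>F. c v *\<^sub>R v) \<in> span S"
    by (rule span_sum, rule span_scale, rule span_base) (use F in auto)
  then show "x \<in> span S" using F by simp
qed

lemma nn2_span: "x \<in> nonneg_span {a, b} \<Longrightarrow> x \<in> span {a, b}"
  using nn_span by blast

lemma span2: "x \<in> span {a, b} \<longleftrightarrow> (\<exists>c d. x = c *\<^sub>R a + d *\<^sub>R b)"
  by (auto simp: span_insert span_singleton algebra_simps)

lemma nn_ray: "x \<in> nonneg_span {a, a} \<longleftrightarrow> (\<exists>c\<ge>0. x = c *\<^sub>R a)"
proof
  assume "x \<in> nonneg_span {a, a}"
  then obtain c d where "0 \<le> c" "0 \<le> d" "x = c *\<^sub>R a + d *\<^sub>R a" using nn2 by blast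
  then show "\<exists>c\<ge>0. x = c *\<^sub>R a" by (intro exI[of _ "c + d"]) (simp add: scaleR_add_left)
next
  assume "\<exists>c\<ge>0. x = c *\<^sub>R a"
  then obtain c where "c \<ge> 0" "x = c *\<^sub>R a" by blast
  then have "\<exists>c' d. 0 \<le> c' \<and> 0 \<le> d \<and> x = c' *\<^sub>R a + d *\<^sub>R a" by (intro exI[of _ c] exI[of _ 0]) simp
  then show "x \<in> nonneg_span {a, a}" unfolding nn2 .
qed

lemma full_in: "full X F \<Longrightarrow> a \<in> F \<Longrightarrow> b \<in> F \<Longrightarrow> z \<in> X \<Longrightarrow> z \<in> span {a, b} \<Longrightarrow> z \<in> F"
  unfolding full_def by blast

lemma cone_in_F:
  assumes "full X F" "a \<in> F" "z \<in> F" "b \<in> X" "z \<in> nonneg_span {a, b}" "a \<in> S" "b \<in> S"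
  shows "z \<in> nonneg_span (S \<inter> F)"
proof -
  obtain c d where cd: "0 \<le> c" "0 \<le> d" "z = c *\<^sub>R a + d *\<^sub>R b" using assms(5) nn2 by blast
  show ?thesis
  proof (cases "d = 0")
    case True
    then have "z \<in> nonneg_span {a, a}" using cd nn_ray by auto
    moreover have "nonneg_span {a, a} \<subseteq> nonneg_span (S \<inter> F)" using assms by (intro nn2_subset) auto
    ultimately show ?thesis by blast
  next
    case False
    have "b = (1/d) *\<^sub>R z + (- c/d) *\<^sub>R a" using cd False by (simp add: algebra_simps)
    then have "b \<in> span {z, a}" using span2 by blast
    then have "b \<in> F" using full_in[OF assms(1) assms(3) assms(2) assms(4)] by simp
    then show ?thesis using assms nn2_subset[of a "S \<inter> F" b] by auto
  qed
qed



lemma closed_subD: "closed_sub Y B \<Longrightarrow> a \<in> B \<Longrightarrow> b \<in> B \<Longrightarrow> z \<in> nonneg_span {a,b} \<Longrightarrow> z \<in> Y \<Longrightarrow> z \<in> B"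
  unfolding closed_sub_def by blast

lemma biclosed_sub_subset: "biclosed_sub Y B \<Longrightarrow> B \<subseteq> Y"
  unfolding biclosed_sub_def closed_sub_def by blast

lemma biclosed_closed: "biclosed_sub Y B \<Longrightarrow> closed_sub Y B"
  unfolding biclosed_sub_def by blast

lemma biclosed_coclosed: "biclosed_sub Y B \<Longrightarrow> closed_sub Y (Y - B)"
  unfolding biclosed_sub_def coclosed_sub_def by blast

lemma biclosed_compl: assumes "biclosed_sub Y B" shows "biclosed_sub Y (Y - B)"
proof -
  have "B \<subseteq> Y" using assms by (rule biclosed_sub_subset)
  then have e: "Y - (Y - B) = B" by blast
  have "closed_sub Y (Y - B)" using assms by (simp add: biclosed_sub_def coclosed_sub_def)
  moreover have "closed_sub Y (Y - (Y - B))" using e assms by (simp add: biclosed_sub_def)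
  ultimately show ?thesis by (simp add: biclosed_sub_def coclosed_sub_def)
qed

lemma closed_restrict: "closed_sub Y B \<Longrightarrow> Z \<subseteq> Y \<Longrightarrow> closed_sub Z (B \<inter> Z)"
  unfolding closed_sub_def by blast

lemma biclosed_restrict: assumes "biclosed_sub Y B" "Z \<subseteq> Y" shows "biclosed_sub Z (B \<inter> Z)"
proof -
  have "closed_sub Z (B \<inter> Z)" using closed_restrict[OF biclosed_closed[OF assms(1)] assms(2)] .
  moreover have "closed_sub Z ((Y - B) \<inter> Z)" using closed_restrict[OF biclosed_coclosed[OF assms(1)] assms(2)] .
  moreover have "(Y - B) \<inter> Z = Z - B \<inter> Z" using assms(2) by blast
  ultimately show ?thesis by (simp add: biclosed_sub_def coclosed_sub_def)
qed

lemma cleanD: assumes "clean Y" "B \<subseteq> Y" "biclosed_sub Y B" shows "weakly_separable Y B"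
proof -
  from assms(1) have "\<forall>B. B \<subseteq> Y \<longrightarrow> biclosed_sub Y B \<longrightarrow> weakly_separable Y B" by (simp only: clean_def)
  then show ?thesis using assms(2,3) by blast
qed

lemma ws_use:
  assumes "clean (F \<inter> Y)" "biclosed_sub Y B" "z \<in> nonneg_span (B \<inter> F)" "z \<in> nonneg_span ((Y - B) \<inter> F)"
  shows "z = 0"
proof -
  have BY: "B \<subseteq> Y" using assms(2) by (rule biclosed_sub_subset)
  have "biclosed_sub (F \<inter> Y) (B \<inter> (F \<inter> Y))" using assms(2) by (rule biclosed_restrict) auto
  then have "weakly_separable (F \<inter> Y) (B \<inter> (F \<inter> Y))" using assms(1) by (intro cleanD) auto
  moreover have "B \<inter> (F \<inter> Y) = B \<inter> F" using BY by blast
  moreover have "(F \<inter> Y) - B \<inter> F = (Y - B) \<inter> F" by blast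
  ultimately show ?thesis using assms(3,4) unfolding weakly_separable_def by auto
qed

lemma ext_closed1:
  assumes "closed_sub Y B" "\<gamma> \<notin> Y" "\<forall>a\<in>B. \<forall>b\<in>B. \<gamma> \<notin> nonneg_span {a, b}"
  shows "closed_sub (insert \<gamma> Y) B"
  using assms unfolding closed_sub_def by blast

lemma ext_closed2:
  assumes "closed_sub Y B" "\<forall>a\<in>insert \<gamma> B. \<forall>z\<in>nonneg_span {\<gamma>, a}. z \<in> Y \<longrightarrow> z \<in> B"
  shows "closed_sub (insert \<gamma> Y) (insert \<gamma> B)"
  unfolding closed_sub_def
proof (intro conjI ballI)
  show "insert \<gamma> B \<subseteq> insert \<gamma> Y" using assms(1) unfolding closed_sub_def by blast
next
  fix \<alpha> \<beta> z assume ab: "\<alpha> \<in> insert \<gamma> B" "\<beta> \<in> insert \<gamma> B" and z: "z \<in> nonneg_span {\<alpha>, \<beta>} \<inter> insert \<gamma> Y"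
  show "z \<in> insert \<gamma> B"
  proof (cases "z = \<gamma>")
    case False
    then have zY: "z \<in> Y" using z by blast
    show ?thesis
    proof (cases "\<alpha> = \<gamma>")
      case True then show ?thesis using assms(2) ab z zY by blast
    next
      case a: False
      show ?thesis
      proof (cases "\<beta> = \<gamma>")
        case True
        then have "z \<in> nonneg_span {\<gamma>, \<alpha>}" using z by (simp add: insert_commute)
        then show ?thesis using assms(2) ab zY by blast
      next
        case False
        then show ?thesis using a ab z zY assms(1) unfolding closed_sub_def by blast
      qed
    qed
  qed simp
qed

lemma indep2:
  fixes \<rho> \<sigma> :: "'a::euclidean_space"
  assumes "dim Y = 2" "Y \<subseteq> span {\<rho>, \<sigma>}" "a *\<^sub>R \<rho> + b *\<^sub>R \<sigma> = 0"
  shows "a = 0 \<and> b = 0"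
proof (rule ccontr)
  assume "\<not> (a = 0 \<and> b = 0)"
  then consider "a \<noteq> 0" | "b \<noteq> 0" by blast
  then show False
  proof cases
    case 1
    have r: "\<rho> = (- b / a) *\<^sub>R \<sigma>"
    proof -
      have "a *\<^sub>R \<rho> = - (b *\<^sub>R \<sigma>)" using assms(3) by (simp add: eq_neg_iff_add_eq_0)
      then have "(1/a) *\<^sub>R (a *\<^sub>R \<rho>) = (1/a) *\<^sub>R (- (b *\<^sub>R \<sigma>))" by simp
      then show ?thesis using 1 by (simp add: divide_inverse)
    qed
    have "Y \<subseteq> span {\<sigma>}"
    proof
      fix y assume "y \<in> Y"
      then obtain c d where "y = c *\<^sub>R \<rho> + d *\<^sub>R \<sigma>" using assms(2) span2 by blast
      then have "y = (c * (- b / a) + d) *\<^sub>R \<sigma>" using r by (simp add: algebra_simps)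
      then show "y \<in> span {\<sigma>}" by (simp add: span_scale span_base)
    qed
    then have "dim Y \<le> card {\<sigma>}" by (intro dim_le_card) auto
    then show False using assms(1) by simp
  next
    case 2
    have r: "\<sigma> = (- a / b) *\<^sub>R \<rho>"
    proof -
      have "b *\<^sub>R \<sigma> = - (a *\<^sub>R \<rho>)" using assms(3) by (simp add: eq_neg_iff_add_eq_0 add.commute)
      then have "(1/b) *\<^sub>R (b *\<^sub>R \<sigma>) = (1/b) *\<^sub>R (- (a *\<^sub>R \<rho>))" by simp
      then show ?thesis using 2 by (simp add: divide_inverse)
    qed
    have "Y \<subseteq> span {\<rho>}"
    proof
      fix y assume "y \<in> Y"
      then obtain c d where "y = c *\<^sub>R \<rho> + d *\<^sub>R \<sigma>" using assms(2) span2 by blast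
      then have "y = (c + d * (- a / b)) *\<^sub>R \<rho>" using r by (simp add: algebra_simps)
      then show "y \<in> span {\<rho>}" by (simp add: span_scale span_base)
    qed
    then have "dim Y \<le> card {\<rho>}" by (intro dim_le_card) auto
    then show False using assms(1) by simp
  qed
qed

lemma fundamental_indep:
  fixes \<rho> \<sigma> :: "'a::euclidean_space"
  assumes "two_dim_linear_subset X Y" "fundamental Y \<rho> \<sigma>" "a *\<^sub>R \<rho> + b *\<^sub>R \<sigma> = 0"
  shows "a = 0 \<and> b = 0"
proof -
  have "Y \<subseteq> span {\<rho>, \<sigma>}" using assms(2) nn_span unfolding fundamental_def by blast
  then show ?thesis using assms(1,3) indep2 unfolding two_dim_linear_subset_def by blast
qed

lemma pointed:
  fixes v :: "'a::euclidean_space"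
  assumes "two_dim_linear_subset X Y" "fundamental Y \<rho> \<sigma>" "v \<in> Y" "(- \<mu>) *\<^sub>R v \<in> Y" "\<mu> > 0"
  shows "v = 0"
proof -
  have sub: "Y \<subseteq> nonneg_span {\<rho>, \<sigma>}" using assms(2) unfolding fundamental_def by blast
  obtain a b where ab: "0 \<le> a" "0 \<le> b" "v = a *\<^sub>R \<rho> + b *\<^sub>R \<sigma>" using sub assms(3) nn2 by blast
  obtain c d where cd: "0 \<le> c" "0 \<le> d" "(- \<mu>) *\<^sub>R v = c *\<^sub>R \<rho> + d *\<^sub>R \<sigma>" using sub assms(4) nn2 by blast
  have "c *\<^sub>R \<rho> + d *\<^sub>R \<sigma> + \<mu> *\<^sub>R v = (- \<mu>) *\<^sub>R v + \<mu> *\<^sub>R v" using cd(3) by simp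
  also have "\<dots> = 0" by (simp add: scaleR_left_distrib[symmetric])
  finally have e: "c *\<^sub>R \<rho> + d *\<^sub>R \<sigma> + \<mu> *\<^sub>R v = 0" .
  have "(c + \<mu> * a) *\<^sub>R \<rho> + (d + \<mu> * b) *\<^sub>R \<sigma> = c *\<^sub>R \<rho> + d *\<^sub>R \<sigma> + \<mu> *\<^sub>R v"
    by (simp add: ab(3) algebra_simps)
  then have "(c + \<mu> * a) *\<^sub>R \<rho> + (d + \<mu> * b) *\<^sub>R \<sigma> = 0" using e by simp
  then have "c + \<mu> * a = 0 \<and> d + \<mu> * b = 0" using fundamental_indep[OF assms(1,2)] by blast
  then have "a = 0" "b = 0" using ab cd assms(5)
    by (smt (verit) mult_pos_pos zero_less_mult_iff)+
  then show ?thesis using ab by simp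
qed

lemma two_dim_pair:
  fixes a1 :: "'a::euclidean_space"
  assumes "a1 \<in> X" "a2 \<in> X" "a1 \<noteq> 0" "a2 \<notin> span {a1}"
  shows "two_dim_linear_subset X (X \<inter> span {a1, a2})"
proof -
  have ne: "a1 \<noteq> a2" using assms(4) by (auto simp: span_base)
  have i1: "independent {a1}"
    by (rule independent_insertI) (use assms(3) in \<open>auto simp: independent_empty\<close>)
  have "independent (insert a2 {a1})"
    by (rule independent_insertI) (use assms(4) i1 in auto)
  then have ind: "independent {a1, a2}" by (simp add: insert_commute)
  have c: "card {a1, a2} = 2" using ne by simp
  have "dim (X \<inter> span {a1, a2}) \<le> card {a1, a2}" by (intro dim_le_card) auto
  moreover have "dim {a1, a2} \<le> dim (X \<inter> span {a1, a2})"
    using assms(1,2) by (intro dim_subset) (auto simp: span_base)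
  moreover have "dim {a1, a2} = 2" using dim_eq_card_independent[OF ind] c by simp
  ultimately have "dim (X \<inter> span {a1, a2}) = 2" using c by linarith
  moreover have "linear_subset X (X \<inter> span {a1, a2})"
    unfolding linear_subset_def by (intro exI[of _ "span {a1, a2}"]) (auto simp: subspace_span)
  ultimately show ?thesis unfolding two_dim_linear_subset_def by blast
qed



definition clean3 :: "'a::real_vector set \<Rightarrow> 'a set \<Rightarrow> bool" where
  "clean3 X Y \<longleftrightarrow> (\<forall>a\<in>Y. \<forall>b\<in>Y. \<forall>c\<in>Y. \<exists>F. full X F \<and> a \<in> F \<and> b \<in> F \<and> c \<in> F \<and> clean (F \<inter> Y))"

lemma clean3D:
  assumes "clean3 X Y" "a \<in> Y" "b \<in> Y" "c \<in> Y"
  obtains F where "full X F" "a \<in> F" "b \<in> F" "c \<in> F" "clean (F \<inter> Y)"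
  using assms unfolding clean3_def by blast

lemma nn_rayI: "0 \<le> c \<Longrightarrow> c *\<^sub>R a \<in> nonneg_span {a}"
  by (rule nn_scale[OF nn_base]) auto

lemma forced:
  assumes "clean3 X Y" "Y \<subseteq> X" "\<gamma> \<in> X" "0 \<notin> Y" "biclosed_sub Y B"
    "b1 \<in> B" "b2 \<in> B" "\<gamma> \<in> nonneg_span {b1, b2}" "a \<in> insert \<gamma> B"
    "z \<in> nonneg_span {\<gamma>, a}" "z \<in> Y" "z \<notin> B"
  shows False
proof -
  have BY: "B \<subseteq> Y" using assms(5) by (rule biclosed_sub_subset)
  define a' where "a' = (if a = \<gamma> then b1 else a)"
  have a'Y: "a' \<in> Y" using assms(6,9) BY unfolding a'_def by auto
  obtain F where F: "full X F" "b1 \<in> F" "b2 \<in> F" "a' \<in> F" "clean (F \<inter> Y)"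
    using clean3D[OF assms(1), of b1 b2 a'] assms(6,7) BY a'Y by blast
  have gF: "\<gamma> \<in> F" using full_in[OF F(1) F(2) F(3) assms(3)] nn2_span assms(8) by blast
  have aF: "a \<in> F" using F(4) gF unfolding a'_def by (auto split: if_splits)
  have zX: "z \<in> X" using assms(2,11) by blast
  have zF: "z \<in> F" using full_in[OF F(1) gF aF zX] nn2_span assms(10) by blast
  have g1: "\<gamma> \<in> nonneg_span (B \<inter> F)" using nn2_subset[of b1 "B \<inter> F" b2] assms(6,7,8) F(2,3) by blast
  have a1: "a \<in> nonneg_span (B \<inter> F)" using assms(9) g1 aF nn_base[of a "B \<inter> F"] by auto
  have z1: "z \<in> nonneg_span (B \<inter> F)" by (rule nn2_sub[OF g1 a1 assms(10)])
  have z2: "z \<in> nonneg_span ((Y - B) \<inter> F)" by (rule nn_base) (use assms(11,12) zF in auto)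
  have "z = 0" by (rule ws_use[OF F(5) assms(5) z1 z2])
  then show False using assms(4,11) by simp
qed

lemma both_forced:
  assumes "clean3 X Y" "Y \<subseteq> X" "\<gamma> \<in> X" "\<gamma> \<noteq> 0" "biclosed_sub Y B"
    "b1 \<in> B" "b2 \<in> B" "n1 \<in> Y - B" "n2 \<in> Y - B"
    "\<gamma> \<in> nonneg_span {b1, b2}" "\<gamma> \<in> nonneg_span {n1, n2}"
  shows False
proof -
  have BY: "B \<subseteq> Y" using assms(5) by (rule biclosed_sub_subset)
  obtain F where F: "full X F" "b1 \<in> F" "b2 \<in> F" "n1 \<in> F" "clean (F \<inter> Y)"
    using clean3D[OF assms(1), of b1 b2 n1] assms(6,7,8) BY by blast
  have gF: "\<gamma> \<in> F" using full_in[OF F(1) F(2) F(3) assms(3)] nn2_span assms(10) by blast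
  have g1: "\<gamma> \<in> nonneg_span (B \<inter> F)" using nn2_subset[of b1 "B \<inter> F" b2] assms(6,7,10) F(2,3) by blast
  have g2: "\<gamma> \<in> nonneg_span ((Y - B) \<inter> F)"
    by (rule cone_in_F[OF F(1) F(4) gF _ assms(11) assms(8,9)]) (use assms(2,9) in blast)
  have "\<gamma> = 0" by (rule ws_use[OF F(5) assms(5) g1 g2])
  then show False using assms(4) by simp
qed

lemma posmult:
  assumes "closed_sub Y B" "z1 \<in> B" "z1 = t *\<^sub>R \<gamma>" "t > 0" "a2 \<in> insert \<gamma> B"
    "z2 \<in> nonneg_span {\<gamma>, a2}" "z2 \<in> Y"
  shows "z2 \<in> B"
proof -
  have g: "\<gamma> = (1/t) *\<^sub>R z1" using assms(3,4) by simp
  obtain c d where cd: "0 \<le> c" "0 \<le> d" "z2 = c *\<^sub>R \<gamma> + d *\<^sub>R a2" using assms(6) nn2 by blast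
  show ?thesis
  proof (cases "a2 = \<gamma>")
    case True
    then have "z2 = (c + d) *\<^sub>R \<gamma>" using cd(3) by (simp add: scaleR_add_left)
    also have "\<dots> = ((c + d) / t) *\<^sub>R z1" using g by simp
    finally have "z2 = ((c + d) / t) *\<^sub>R z1" .
    moreover have "((c + d) / t) *\<^sub>R z1 \<in> nonneg_span {z1}" using cd assms(4) by (intro nn_rayI) simp
    ultimately have "z2 \<in> nonneg_span {z1, z1}" by simp
    then show ?thesis using closed_subD[OF assms(1) assms(2) assms(2)] assms(7) by blast
  next
    case False
    then have a2B: "a2 \<in> B" using assms(5) by blast
    have "z2 = (c / t) *\<^sub>R z1 + d *\<^sub>R a2" using cd(3) g by simp
    then have "z2 \<in> nonneg_span {z1, a2}" unfolding nn2 using cd assms(4)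
      by (intro exI[of _ "c/t"] exI[of _ d]) simp
    then show ?thesis using closed_subD[OF assms(1) assms(2) a2B] assms(7) by blast
  qed
qed

lemma coef:
  assumes "closed_sub Y N" "0 \<notin> Y" "z \<in> Y" "z \<notin> N" "a \<in> insert \<gamma> N" "z \<in> nonneg_span {\<gamma>, a}"
  shows "(\<exists>t>0. z = t *\<^sub>R \<gamma>) \<or> (a \<in> N \<and> (\<exists>c d. c > 0 \<and> d > 0 \<and> z = c *\<^sub>R \<gamma> + d *\<^sub>R a))"
proof -
  obtain c d where cd: "0 \<le> c" "0 \<le> d" "z = c *\<^sub>R \<gamma> + d *\<^sub>R a" using assms(6) nn2 by blast
  have z0: "z \<noteq> 0" using assms(2,3) by auto
  show ?thesis
  proof (cases "a = \<gamma>")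
    case True
    then have "z = (c + d) *\<^sub>R \<gamma>" using cd by (simp add: scaleR_add_left)
    moreover have "c + d \<noteq> 0" using calculation z0 by auto
    ultimately have "c + d > 0 \<and> z = (c + d) *\<^sub>R \<gamma>" using cd by auto
    then show ?thesis by blast
  next
    case False
    then have aN: "a \<in> N" using assms(5) by blast
    show ?thesis
    proof (cases "d = 0")
      case True
      then have "z = c *\<^sub>R \<gamma>" using cd by simp
      moreover have "c \<noteq> 0" using calculation z0 by auto
      ultimately have "c > 0 \<and> z = c *\<^sub>R \<gamma>" using cd by auto
      then show ?thesis by blast
    next
      case d: False
      show ?thesis
      proof (cases "c = 0")
        case True
        then have "z \<in> nonneg_span {a, a}" using cd nn_ray by auto
        then have "z \<in> N" using closed_subD[OF assms(1) aN aN] assms(3) by blast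
        then show ?thesis using assms(4) by blast
      next
        case False
        have "a \<in> N \<and> (\<exists>c d. c > 0 \<and> d > 0 \<and> z = c *\<^sub>R \<gamma> + d *\<^sub>R a)"
          by (intro conjI aN exI[of _ c] exI[of _ d]) (use cd d False in auto)
        then show ?thesis by blast
      qed
    qed
  qed
qed



lemma gap:
  assumes fund: "\<forall>Y. two_dim_linear_subset X Y \<longrightarrow> (\<exists>\<alpha> \<beta>. fundamental Y \<alpha> \<beta>)"
    and cl3: "clean3 X Y" and YX: "Y \<subseteq> X" and gX: "\<gamma> \<in> X" and Y0: "0 \<notin> Y"
    and bic: "biclosed_sub Y B"
    and a1: "a1 \<in> insert \<gamma> (Y - B)" and z1: "z1 \<in> nonneg_span {\<gamma>, a1}" "z1 \<in> B"
    and a2: "a2 \<in> insert \<gamma> B" and z2: "z2 \<in> nonneg_span {\<gamma>, a2}" "z2 \<in> Y - B"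
  shows False
proof -
  have BY: "B \<subseteq> Y" using bic by (rule biclosed_sub_subset)
  have clB: "closed_sub Y B" using bic by (rule biclosed_closed)
  have clN: "closed_sub Y (Y - B)" using bic by (rule biclosed_coclosed)
  have z1Y: "z1 \<in> Y" using z1 BY by blast
  have z2Y: "z2 \<in> Y" using z2 by blast
  have c1: "(\<exists>t>0. z1 = t *\<^sub>R \<gamma>) \<or> (a1 \<in> Y - B \<and> (\<exists>c d. c > 0 \<and> d > 0 \<and> z1 = c *\<^sub>R \<gamma> + d *\<^sub>R a1))"
    by (rule coef[OF clN Y0 z1Y _ a1 z1(1)]) (use z1 in blast)
  have c2: "(\<exists>t>0. z2 = t *\<^sub>R \<gamma>) \<or> (a2 \<in> B \<and> (\<exists>c d. c > 0 \<and> d > 0 \<and> z2 = c *\<^sub>R \<gamma> + d *\<^sub>R a2))"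
    by (rule coef[OF clB Y0 z2Y _ a2 z2(1)]) (use z2 in blast)
  have np1: "\<not> (\<exists>t>0. z1 = t *\<^sub>R \<gamma>)"
  proof
    assume "\<exists>t>0. z1 = t *\<^sub>R \<gamma>"
    then obtain t where "t > 0" "z1 = t *\<^sub>R \<gamma>" by blast
    then have "z2 \<in> B" using posmult[OF clB z1(2) _ _ a2 z2(1) z2Y] by blast
    then show False using z2 by blast
  qed
  have np2: "\<not> (\<exists>t>0. z2 = t *\<^sub>R \<gamma>)"
  proof
    assume "\<exists>t>0. z2 = t *\<^sub>R \<gamma>"
    then obtain t where "t > 0" "z2 = t *\<^sub>R \<gamma>" by blast
    then have "z1 \<in> Y - B" using posmult[OF clN z2(2) _ _ a1 z1(1) z1Y] by blast
    then show False using z1 by blast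
  qed
  obtain c1 d1 where a1N: "a1 \<in> Y - B" and cd1: "c1 > 0" "d1 > 0" "z1 = c1 *\<^sub>R \<gamma> + d1 *\<^sub>R a1"
    using c1 np1 by blast
  obtain c2 d2 where a2B: "a2 \<in> B" and cd2: "c2 > 0" "d2 > 0" "z2 = c2 *\<^sub>R \<gamma> + d2 *\<^sub>R a2"
    using c2 np2 by blast
  have a1Y: "a1 \<in> Y" using a1N by blast
  have a2Y: "a2 \<in> Y" using a2B BY by blast
  obtain F where F: "full X F" "z1 \<in> F" "a1 \<in> F" "a2 \<in> F" "clean (F \<inter> Y)"
    using clean3D[OF cl3 z1Y a1Y a2Y] by blast
  have "\<gamma> = (1 / c1) *\<^sub>R z1 + (- d1 / c1) *\<^sub>R a1" using cd1 by (simp add: algebra_simps)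
  then have "\<gamma> \<in> span {z1, a1}" using span2 by blast
  then have gF: "\<gamma> \<in> F" using full_in[OF F(1) F(2) F(3) gX] by blast
  have z2F: "z2 \<in> F" using full_in[OF F(1) gF F(4)] z2Y YX nn2_span z2(1) by blast
  define v1 where "v1 = c2 *\<^sub>R z1 + (c1 * d2) *\<^sub>R a2"
  define v2 where "v2 = c1 *\<^sub>R z2 + (c2 * d1) *\<^sub>R a1"
  have v12: "v1 = v2" unfolding v1_def v2_def cd1(3) cd2(3) by (simp add: algebra_simps)
  have "v1 \<in> nonneg_span (B \<inter> F)" unfolding v1_def
    by (intro nn_add nn_scale nn_base) (use cd1 cd2 z1 a2B F in auto)
  moreover have "v2 \<in> nonneg_span ((Y - B) \<inter> F)" unfolding v2_def
    by (intro nn_add nn_scale nn_base) (use cd1 cd2 z2 a1N z2F F in auto)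
  ultimately have "v2 = 0" using ws_use[OF F(5) bic] v12 by simp
  then have "v1 = 0" using v12 by simp
  have ez2: "z2 = (- (c2 * d1 / c1)) *\<^sub>R a1"
  proof -
    have "c1 *\<^sub>R z2 = - ((c2 * d1) *\<^sub>R a1)" using \<open>v2 = 0\<close> unfolding v2_def
      by (simp add: eq_neg_iff_add_eq_0)
    then have "(1/c1) *\<^sub>R (c1 *\<^sub>R z2) = (1/c1) *\<^sub>R (- ((c2 * d1) *\<^sub>R a1))" by simp
    then show ?thesis using cd1 by simp
  qed
  have ez1: "z1 = (- (c1 * d2 / c2)) *\<^sub>R a2"
  proof -
    have "c2 *\<^sub>R z1 = - ((c1 * d2) *\<^sub>R a2)" using \<open>v1 = 0\<close> unfolding v1_def
      by (simp add: eq_neg_iff_add_eq_0)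
    then have "(1/c2) *\<^sub>R (c2 *\<^sub>R z1) = (1/c2) *\<^sub>R (- ((c1 * d2) *\<^sub>R a2))" by simp
    then show ?thesis using cd2 by simp
  qed
  show False
  proof (cases "a2 \<in> span {a1}")
    case True
    then obtain l where l: "a2 = l *\<^sub>R a1" by (auto simp: span_singleton)
    consider "l > 0" | "l = 0" | "l < 0" by linarith
    then show False
    proof cases
      case 1
      then have "a2 \<in> nonneg_span {a1, a1}" using l nn_rayI[of l a1] by simp
      then have "a2 \<in> Y - B" using closed_subD[OF clN a1N a1N] a2Y by blast
      then show False using a2B by blast
    next
      case 2
      then show False using l a2Y Y0 by simp
    next
      case 3
      have z1e: "z1 = (- (c1 * d2 / c2) * l) *\<^sub>R a1" using ez1 l by simp
      have nn:  "- (c1 * d2 / c2) * l \<ge> 0"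
      proof -
        have p: "c1 * d2 / c2 > 0" using cd1 cd2 by simp
        have "(c1 * d2 / c2) * l < 0" using mult_pos_neg[OF p 3] .
        then show ?thesis by simp
      qed
      have "z1 \<in> nonneg_span {a1}" unfolding z1e by (rule nn_rayI[OF nn])
      then have "z1 \<in> nonneg_span {a1, a1}" by simp
      then have "z1 \<in> Y - B" using closed_subD[OF clN a1N a1N] z1Y by blast
      then show False using z1 by blast
    qed
  next
    case False
    have a10: "a1 \<noteq> 0" using a1Y Y0 by auto
    have td: "two_dim_linear_subset X (X \<inter> span {a1, a2})"
      by (rule two_dim_pair) (use a1Y a2Y YX a10 False in auto)
    then obtain \<rho> \<sigma> where fs: "fundamental (X \<inter> span {a1, a2}) \<rho> \<sigma>" using fund by blast
    have "z2 \<in> span {a1, a2}" unfolding span2 using ez2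
      by (intro exI[of _ "- (c2 * d1 / c1)"] exI[of _ 0]) simp
    then have "z2 \<in> X \<inter> span {a1, a2}" using z2Y YX by blast
    then have "(- (c2 * d1 / c1)) *\<^sub>R a1 \<in> X \<inter> span {a1, a2}" unfolding ez2 .
    moreover have "a1 \<in> X \<inter> span {a1, a2}" using a1Y YX by (auto intro: span_base)
    moreover have "c2 * d1 / c1 > 0" using cd1 cd2 by simp
    ultimately have "a1 = 0" using pointed[OF td fs] by blast
    then show False using a10 by simp
  qed
qed

lemma extend:
  assumes fund: "\<forall>Y. two_dim_linear_subset X Y \<longrightarrow> (\<exists>\<alpha> \<beta>. fundamental Y \<alpha> \<beta>)"
    and cl3: "clean3 X Y" and YX: "Y \<subseteq> X" and gX: "\<gamma> \<in> X" and gY: "\<gamma> \<notin> Y"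
    and g0: "\<gamma> \<noteq> 0" and Y0: "0 \<notin> Y" and bic: "biclosed_sub Y B"
  shows "biclosed_sub (insert \<gamma> Y) B \<or> biclosed_sub (insert \<gamma> Y) (insert \<gamma> B)"
proof -
  have BY: "B \<subseteq> Y" using bic by (rule biclosed_sub_subset)
  have clB: "closed_sub Y B" using bic by (rule biclosed_closed)
  have clN: "closed_sub Y (Y - B)" using bic by (rule biclosed_coclosed)
  have bicN: "biclosed_sub Y (Y - B)" using bic by (rule biclosed_compl)
  have YNN: "Y - (Y - B) = B" using BY by blast
  define I where "I \<longleftrightarrow> (\<forall>a\<in>B. \<forall>b\<in>B. \<gamma> \<notin> nonneg_span {a, b})"
  define I' where "I' \<longleftrightarrow> (\<forall>a\<in>Y - B. \<forall>b\<in>Y - B. \<gamma> \<notin> nonneg_span {a, b})"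
  define II where "II \<longleftrightarrow> (\<forall>a\<in>insert \<gamma> (Y - B). \<forall>z\<in>nonneg_span {\<gamma>, a}. z \<in> Y \<longrightarrow> z \<in> Y - B)"
  define II' where "II' \<longleftrightarrow> (\<forall>a\<in>insert \<gamma> B. \<forall>z\<in>nonneg_span {\<gamma>, a}. z \<in> Y \<longrightarrow> z \<in> B)"
  have h1: "I \<or> I'"
  proof (rule ccontr)
    assume "\<not> (I \<or> I')"
    then obtain b1 b2 n1 n2 where "b1 \<in> B" "b2 \<in> B" "\<gamma> \<in> nonneg_span {b1, b2}"
      "n1 \<in> Y - B" "n2 \<in> Y - B" "\<gamma> \<in> nonneg_span {n1, n2}"
      unfolding I_def I'_def by blast
    then show False using both_forced[OF cl3 YX gX g0 bic] by blast
  qed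
  have h2: "I \<or> II'"
  proof (rule ccontr)
    assume "\<not> (I \<or> II')"
    then obtain b1 b2 a z where "b1 \<in> B" "b2 \<in> B" "\<gamma> \<in> nonneg_span {b1, b2}"
      "a \<in> insert \<gamma> B" "z \<in> nonneg_span {\<gamma>, a}" "z \<in> Y" "z \<notin> B"
      unfolding I_def II'_def by blast
    then show False using forced[OF cl3 YX gX Y0 bic] by blast
  qed
  have h3: "II \<or> I'"
  proof (rule ccontr)
    assume "\<not> (II \<or> I')"
    then obtain b1 b2 a z where "b1 \<in> Y - B" "b2 \<in> Y - B" "\<gamma> \<in> nonneg_span {b1, b2}"
      "a \<in> insert \<gamma> (Y - B)" "z \<in> nonneg_span {\<gamma>, a}" "z \<in> Y" "z \<notin> Y - B"
      unfolding II_def I'_def by blast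
    then show False using forced[OF cl3 YX gX Y0 bicN] by blast
  qed
  have h4: "II \<or> II'"
  proof (rule ccontr)
    assume "\<not> (II \<or> II')"
    then obtain a1 z1 a2 z2 where "a1 \<in> insert \<gamma> (Y - B)" "z1 \<in> nonneg_span {\<gamma>, a1}" "z1 \<in> Y" "z1 \<notin> Y - B"
      "a2 \<in> insert \<gamma> B" "z2 \<in> nonneg_span {\<gamma>, a2}" "z2 \<in> Y" "z2 \<notin> B"
      unfolding II_def II'_def by blast
    then show False using gap[OF fund cl3 YX gX Y0 bic, of a1 z1 a2 z2] by blast
  qed
  have "(I \<and> II) \<or> (I' \<and> II')" using h1 h2 h3 h4 by blast
  then show ?thesis
  proof
    assume "I \<and> II"
    have "closed_sub (insert \<gamma> Y) B" using ext_closed1[OF clB gY] \<open>I \<and> II\<close> unfolding I_def by blast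
    moreover have "closed_sub (insert \<gamma> Y) (insert \<gamma> (Y - B))"
      using ext_closed2[OF clN] \<open>I \<and> II\<close> unfolding II_def by blast
    moreover have "insert \<gamma> Y - B = insert \<gamma> (Y - B)" using BY gY by blast
    ultimately have "biclosed_sub (insert \<gamma> Y) B"
      unfolding biclosed_sub_def coclosed_sub_def using BY by auto
    then show ?thesis by blast
  next
    assume "I' \<and> II'"
    have "closed_sub (insert \<gamma> Y) (insert \<gamma> B)" using ext_closed2[OF clB] \<open>I' \<and> II'\<close> unfolding II'_def by blast
    moreover have "closed_sub (insert \<gamma> Y) (Y - B)"
      using ext_closed1[OF clN gY] \<open>I' \<and> II'\<close> unfolding I'_def by blast
    moreover have "insert \<gamma> Y - insert \<gamma> B = Y - B" using BY gY by blast
    ultimately have "biclosed_sub (insert \<gamma> Y) (insert \<gamma> B)"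
      unfolding biclosed_sub_def coclosed_sub_def using BY by auto
    then show ?thesis by blast
  qed
qed



lemma ord_down: "ordering_of X g K \<Longrightarrow> i \<in> K \<Longrightarrow> j < i \<Longrightarrow> j \<in> K"
  unfolding ordering_of_def by blast

lemma ord_inj: "ordering_of X g K \<Longrightarrow> inj_on g K"
  unfolding ordering_of_def by blast

lemma ord_img: "ordering_of X g K \<Longrightarrow> g ` K = X"
  unfolding ordering_of_def by blast

lemma init_seg_X: "ordering_of X g K \<Longrightarrow> {..<i} \<subseteq> K \<Longrightarrow> init_seg g i \<subseteq> X"
  unfolding ordering_of_def init_seg_def by blast

lemma init_seg_Suc: "init_seg g (Suc i) = insert (g i) (init_seg g i)"
  unfolding init_seg_def by (simp add: lessThan_Suc)

lemma init_seg_mono: "i \<le> j \<Longrightarrow> init_seg g i \<subseteq> init_seg g j"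
  unfolding init_seg_def by auto

lemma finite_init_seg: "finite (init_seg g i)"
  unfolding init_seg_def by simp

lemma init_seg_mem: "j < i \<Longrightarrow> g j \<in> init_seg g i"
  unfolding init_seg_def by simp

lemma not_in_init_seg:
  assumes "ordering_of X g K" "j \<in> K" "{..<i} \<subseteq> K" "i \<le> j"
  shows "g j \<notin> init_seg g i"
proof
  assume "g j \<in> init_seg g i"
  then obtain l where "l < i" "g j = g l" unfolding init_seg_def by blast
  moreover have "l \<in> K" using \<open>l < i\<close> assms(3) by blast
  ultimately show False using inj_onD[OF ord_inj[OF assms(1)] _ assms(2)] assms(4) by force
qed

lemma lessThan_Suc_K: "ordering_of X g K \<Longrightarrow> j \<in> K \<Longrightarrow> {..<Suc j} \<subseteq> K"
  using ord_down[of X g K j] by (auto simp: less_Suc_eq)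

lemma suitable_clean3: "suitable X g K \<Longrightarrow> {..<i} \<subseteq> K \<Longrightarrow> clean3 X (init_seg g i)"
  unfolding suitable_def clean3_def by blast

definition chain :: "(nat \<Rightarrow> 'a::real_vector) \<Rightarrow> nat \<Rightarrow> 'a set \<Rightarrow> nat \<Rightarrow> 'a set" where
  "chain g m U n = rec_nat U (\<lambda>j B. if biclosed_sub (init_seg g (Suc (m + j))) (insert (g (m + j)) B)
      then insert (g (m + j)) B else B) n"

lemma chain_0: "chain g m U 0 = U" by (simp add: chain_def)

lemma chain_Suc: "chain g m U (Suc n) = (if biclosed_sub (init_seg g (Suc (m + n))) (insert (g (m + n)) (chain g m U n))
      then insert (g (m + n)) (chain g m U n) else chain g m U n)"
  by (simp add: chain_def)

lemma chain_mono1: "chain g m U n \<subseteq> chain g m U (Suc n)"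
  by (auto simp: chain_Suc)

lemma chain_mono: "n \<le> n' \<Longrightarrow> chain g m U n \<subseteq> chain g m U n'"
  by (rule lift_Suc_mono_le[of "chain g m U"]) (auto simp: chain_mono1)

lemma chain_inv:
  assumes ord: "ordering_of X g K"
    and fund: "\<forall>Y. two_dim_linear_subset X Y \<longrightarrow> (\<exists>\<alpha> \<beta>. fundamental Y \<alpha> \<beta>)"
    and suit: "suitable X g K" and mK: "{..<m} \<subseteq> K" and bic: "biclosed_sub (init_seg g m) U"
  shows "{..<m + n} \<subseteq> K \<Longrightarrow> 0 \<notin> init_seg g (m + n) \<Longrightarrow>
    biclosed_sub (init_seg g (m + n)) (chain g m U n) \<and> chain g m U n \<inter> init_seg g m = U"
proof (induction n)
  case 0
  have "U \<subseteq> init_seg g m" using bic by (rule biclosed_sub_subset)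
  then show ?case using bic by (auto simp: chain_0)
next
  case (Suc n)
  let ?Y = "init_seg g (m + n)"
  let ?g = "g (m + n)"
  have K: "{..<m + n} \<subseteq> K" using Suc.prems(1) by auto
  have mnK: "m + n \<in> K" using Suc.prems(1) by auto
  have ins: "init_seg g (m + Suc n) = insert ?g ?Y" by (simp add: init_seg_Suc)
  have ni: "0 \<notin> insert ?g ?Y" using Suc.prems(2) ins by simp
  have Y0: "0 \<notin> ?Y" using ni by simp
  have g0: "?g \<noteq> 0" using ni by simp
  have IH: "biclosed_sub ?Y (chain g m U n)" "chain g m U n \<inter> init_seg g m = U"
    using Suc.IH[OF K Y0] by blast+
  have YX: "?Y \<subseteq> X" by (rule init_seg_X[OF ord K])
  have gX: "?g \<in> X" using ord_img[OF ord] mnK by blast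
  have gY: "?g \<notin> ?Y" by (rule not_in_init_seg[OF ord mnK K]) simp
  have gm: "?g \<notin> init_seg g m" by (rule not_in_init_seg[OF ord mnK mK]) simp
  have cl3: "clean3 X ?Y" by (rule suitable_clean3[OF suit K])
  have ext: "biclosed_sub (insert ?g ?Y) (chain g m U n) \<or> biclosed_sub (insert ?g ?Y) (insert ?g (chain g m U n))"
    by (rule extend[OF fund cl3 YX gX gY g0 Y0 IH(1)])
  have "biclosed_sub (init_seg g (m + Suc n)) (chain g m U (Suc n))"
    using ext unfolding ins chain_Suc by (auto simp: init_seg_Suc)
  moreover have "chain g m U (Suc n) \<inter> init_seg g m = U"
    using IH(2) gm unfolding chain_Suc by auto
  ultimately show ?case by blast
qed

lemma closed_sub_empty: "closed_sub X {}"
  unfolding closed_sub_def by simp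

lemma closed_sub_all: "closed_sub X X"
  unfolding closed_sub_def by simp

lemma zero_biclosed:
  assumes "biclosed_sub Y B" "0 \<in> Y" shows "B = {} \<or> B = Y"
proof (rule ccontr)
  assume "\<not> (B = {} \<or> B = Y)"
  moreover have "B \<subseteq> Y" using assms(1) by (rule biclosed_sub_subset)
  ultimately obtain b n where b: "b \<in> B" and n: "n \<in> Y - B" by blast
  have "0 \<in> nonneg_span {b, b}" by (rule nn_zero)
  then have "0 \<in> B" using closed_subD[OF biclosed_closed[OF assms(1)] b b] assms(2) by blast
  moreover have "0 \<in> nonneg_span {n, n}" by (rule nn_zero)
  then have "0 \<in> Y - B" using closed_subD[OF biclosed_coclosed[OF assms(1)] n n] assms(2) by blast
  ultimately show False by blast
qed

lemma caseA:
  assumes ord: "ordering_of X g K"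
    and fund: "\<forall>Y. two_dim_linear_subset X Y \<longrightarrow> (\<exists>\<alpha> \<beta>. fundamental Y \<alpha> \<beta>)"
    and suit: "suitable X g K" and mK: "{..<m} \<subseteq> K" and bic: "biclosed_sub (init_seg g m) U"
    and X0: "0 \<notin> X"
  shows "\<exists>C. C \<subseteq> X \<and> closed_sub X C \<and> U \<subseteq> C \<and> C \<inter> init_seg g m \<subseteq> U"
proof -
  define R where "R = {n. {..<m + n} \<subseteq> K}"
  define C where "C = (\<Union>n\<in>R. chain g m U n)"
  have inv: "biclosed_sub (init_seg g (m + n)) (chain g m U n) \<and> chain g m U n \<inter> init_seg g m = U"
    if "n \<in> R" for n
  proof -
    have K: "{..<m + n} \<subseteq> K" using that R_def by simp
    have "0 \<notin> init_seg g (m + n)" using init_seg_X[OF ord K] X0 by blast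
    then show ?thesis using chain_inv[OF ord fund suit mK bic K] by blast
  qed
  have sub: "chain g m U n \<subseteq> X" if "n \<in> R" for n
    using biclosed_sub_subset[of "init_seg g (m + n)"] inv[OF that] init_seg_X[OF ord] that R_def by blast
  have "C \<subseteq> X" unfolding C_def using sub by blast
  moreover have "closed_sub X C"
    unfolding closed_sub_def
  proof (intro conjI ballI)
    show "C \<subseteq> X" unfolding C_def using sub by blast
  next
    fix \<alpha> \<beta> z assume a: "\<alpha> \<in> C" and b: "\<beta> \<in> C" and z: "z \<in> nonneg_span {\<alpha>, \<beta>} \<inter> X"
    obtain n1 where n1: "n1 \<in> R" "\<alpha> \<in> chain g m U n1" using a C_def by blast
    obtain n2 where n2: "n2 \<in> R" "\<beta> \<in> chain g m U n2" using b C_def by blast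
    obtain j where j: "j \<in> K" "z = g j" using z ord_img[OF ord] by blast
    define N where "N = max (max n1 n2) (Suc j - m)"
    have NR: "N \<in> R"
    proof -
      have "i \<in> K" if "i < m + N" for i
      proof -
        have "i < m + n1 \<or> i < m + n2 \<or> i < m \<or> i < Suc j" using that N_def by auto
        then show ?thesis using n1(1) n2(1) mK lessThan_Suc_K[OF ord j(1)] R_def by auto
      qed
      then show ?thesis unfolding R_def by auto
    qed
    have "n1 \<le> N" "n2 \<le> N" by (simp_all add: N_def)
    have "\<alpha> \<in> chain g m U N" using n1(2) chain_mono[OF \<open>n1 \<le> N\<close>] by blast
    moreover have "\<beta> \<in> chain g m U N" using n2(2) chain_mono[OF \<open>n2 \<le> N\<close>] by blast
    moreover have "z \<in> init_seg g (m + N)" using j(2) init_seg_mem[of j "m + N" g] N_def by auto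
    ultimately have "z \<in> chain g m U N"
      using closed_subD[OF biclosed_closed[OF conjunct1[OF inv[OF NR]]]] z by blast
    then show "z \<in> C" using NR C_def by blast
  qed
  moreover have "U \<subseteq> C"
  proof -
    have "0 \<in> R" using mK by (simp add: R_def)
    moreover have "chain g m U 0 = U" by (rule chain_0)
    ultimately show ?thesis unfolding C_def by blast
  qed
  moreover have "C \<inter> init_seg g m \<subseteq> U" unfolding C_def using inv by blast
  ultimately show ?thesis by blast
qed

lemma caseB:
  assumes bic: "biclosed_sub (init_seg g m) U" and z: "0 \<in> init_seg g m"
    and sub: "init_seg g m \<subseteq> X"
  shows "\<exists>C. C \<subseteq> X \<and> closed_sub X C \<and> U \<subseteq> C \<and> C \<inter> init_seg g m \<subseteq> U"
proof -
  have "U = {} \<or> U = init_seg g m" by (rule zero_biclosed[OF bic z])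
  then show ?thesis
  proof
    assume "U = {}"
    then show ?thesis using closed_sub_empty by (intro exI[of _ "{}"]) auto
  next
    assume "U = init_seg g m"
    then show ?thesis using closed_sub_all sub by (intro exI[of _ X]) auto
  qed
qed



lemma collinear_cone:
  assumes "z \<in> nonneg_span {x, y}" "y = \<mu> *\<^sub>R x"
  shows "z \<in> nonneg_span {x, x} \<or> z \<in> nonneg_span {y, y}"
proof -
  obtain s t where st: "0 \<le> s" "0 \<le> t" "z = s *\<^sub>R x + t *\<^sub>R y" using assms(1) nn2 by blast
  have z: "z = (s + t * \<mu>) *\<^sub>R x" using st(3) assms(2) by (simp add: algebra_simps)
  show ?thesis
  proof (cases "s + t * \<mu> \<ge> 0")
    case True
    then have "z \<in> nonneg_span {x}" unfolding z by (rule nn_rayI)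
    then show ?thesis by simp
  next
    case False
    then have "t * \<mu> < 0" using st by linarith
    then have mu: "\<mu> < 0" using st(2) by (simp add: mult_less_0_iff)
    have "((s + t * \<mu>) / \<mu>) *\<^sub>R y = z" using mu unfolding z assms(2) by simp
    moreover have "(s + t * \<mu>) / \<mu> \<ge> 0" using False mu by (simp add: divide_nonpos_neg)
    ultimately have "z \<in> nonneg_span {y}" using nn_rayI by metis
    then show ?thesis by simp
  qed
qed

lemma collinear2:
  assumes "z \<in> nonneg_span {x, y}" "z = l *\<^sub>R x"
  shows "z \<in> nonneg_span {x, x} \<or> z \<in> nonneg_span {y, y}"
proof -
  obtain s t where st: "0 \<le> s" "0 \<le> t" "z = s *\<^sub>R x + t *\<^sub>R y" using assms(1) nn2 by blast
  show ?thesis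
  proof (cases "t = 0")
    case True
    then have "z \<in> nonneg_span {x}" using st by (simp add: nn_rayI)
    then show ?thesis by simp
  next
    case False
    have "t *\<^sub>R y = (l - s) *\<^sub>R x" using st(3) assms(2) by (simp add: algebra_simps)
    then have "(1/t) *\<^sub>R (t *\<^sub>R y) = (1/t) *\<^sub>R ((l - s) *\<^sub>R x)" by simp
    then have "y = ((l - s) / t) *\<^sub>R x" using False by simp
    then show ?thesis using collinear_cone[OF assms(1)] by blast
  qed
qed

lemma caseC1:
  assumes cl3: "clean3 X Q" and OX: "Q \<subseteq> X" and O0: "0 \<notin> Q" and bic: "biclosed_sub Q B"
    and par: "\<forall>w1\<in>X - Q. \<forall>w2\<in>X - Q. w1 \<noteq> 0 \<longrightarrow> w2 \<noteq> 0 \<longrightarrow> w2 \<in> span {w1}"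
  shows "\<exists>C. C \<subseteq> X \<and> closed_sub X C \<and> B \<subseteq> C \<and> C \<inter> Q \<subseteq> B"
proof -
  have BO: "B \<subseteq> Q" using bic by (rule biclosed_sub_subset)
  have clB: "closed_sub Q B" using bic by (rule biclosed_closed)
  define D where "D = {z \<in> X - Q. \<exists>b1\<in>B. \<exists>b2\<in>B. z \<in> nonneg_span {b1, b2}}"
  define C where "C = B \<union> D"
  have CX: "C \<subseteq> X" using BO OX unfolding C_def D_def by blast
  have rep: "\<exists>b1\<in>B. \<exists>b2\<in>B. c \<in> nonneg_span {b1, b2}" if "c \<in> C" for c
  proof (cases "c \<in> B")
    case True then show ?thesis by (intro bexI[of _ c]) (auto intro: nn_base)
  next
    case False then show ?thesis using that unfolding C_def D_def by blast
  qed
  have H: "z \<in> C" if hz: "z \<in> X" "b1 \<in> B" "b2 \<in> B" "z \<in> nonneg_span {b1, b2}" for z b1 b2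
  proof (cases "z \<in> Q")
    case True
    then have "z \<in> B" using closed_subD[OF clB hz(2,3,4)] by blast
    then show ?thesis unfolding C_def by blast
  next
    case False
    then show ?thesis using hz unfolding C_def D_def by blast
  qed
  have H2: "z \<in> C" if h2: "z \<in> X" "x \<in> C" "z \<in> nonneg_span {x, x}" for z x
  proof -
    obtain b1 b2 where b: "b1 \<in> B" "b2 \<in> B" "x \<in> nonneg_span {b1, b2}" using rep[OF h2(2)] by blast
    have "z \<in> nonneg_span {b1, b2}" by (rule nn2_sub[OF b(3) b(3) h2(3)])
    then show ?thesis using H[OF h2(1) b(1,2)] by blast
  qed
  have aux: "z \<in> C" if xD: "x \<in> D" and yC: "y \<in> C" and z: "z \<in> nonneg_span {x, y}" "z \<in> X" for x y z
  proof -
    have xC: "x \<in> C" using xD C_def by blast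
    have xXO: "x \<in> X - Q" using xD D_def by blast
    obtain b1 b2 where b: "b1 \<in> B" "b2 \<in> B" "x \<in> nonneg_span {b1, b2}" using xD D_def by blast
    show ?thesis
    proof (cases "x = 0")
      case True
      have "y = 1 *\<^sub>R y" by simp
      have "z \<in> nonneg_span {y, y} \<or> z \<in> nonneg_span {x, x}"
        using collinear_cone[of z y x 0] z(1) True by (simp add: insert_commute)
      moreover have "z \<in> nonneg_span {x, x} \<Longrightarrow> z \<in> C" using H2[OF z(2) xC] .
      moreover have "z \<in> nonneg_span {y, y} \<Longrightarrow> z \<in> C" using H2[OF z(2) yC] .
      ultimately show ?thesis by blast
    next
      case x0: False
      show ?thesis
      proof (cases "y \<in> D")
        case True
        have yXO: "y \<in> X - Q" using True D_def by blast
        show ?thesis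
        proof (cases "y = 0")
          case True
          have "z \<in> nonneg_span {x, x} \<or> z \<in> nonneg_span {y, y}"
            using collinear_cone[OF z(1), of 0] True by simp
          then show ?thesis using H2[OF z(2) xC] H2[OF z(2) yC] by blast
        next
          case False
          then have "y \<in> span {x}" using par xXO yXO x0 by blast
          then obtain mu where "y = mu *\<^sub>R x" by (auto simp: span_singleton)
          then have "z \<in> nonneg_span {x, x} \<or> z \<in> nonneg_span {y, y}"
            using collinear_cone[OF z(1)] by blast
          then show ?thesis using H2[OF z(2) xC] H2[OF z(2) yC] by blast
        qed
      next
        case False
        then have yB: "y \<in> B" using yC C_def by blast
        show ?thesis
        proof (cases "z \<in> Q")
          case True
          show ?thesis
          proof (rule ccontr)
            assume "z \<notin> C"
            then have "z \<notin> B" using C_def by blast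
            then show False using forced[OF cl3 OX _ O0 bic b(1,2) b(3) _ z(1) True] xXO yB by blast
          qed
        next
          case zO: False
          show ?thesis
          proof (cases "z = 0")
            case True
            then have "z \<in> nonneg_span {y, y}" using nn_zero by simp
            then show ?thesis using H2[OF z(2) yC] by blast
          next
            case False
            then have "z \<in> span {x}" using par xXO zO z(2) x0 by blast
            then obtain l where "z = l *\<^sub>R x" by (auto simp: span_singleton)
            then have "z \<in> nonneg_span {x, x} \<or> z \<in> nonneg_span {y, y}"
              using collinear2[OF z(1)] by blast
            then show ?thesis using H2[OF z(2) xC] H2[OF z(2) yC] by blast
          qed
        qed
      qed
    qed
  qed
  have "closed_sub X C"
    unfolding closed_sub_def
  proof (intro conjI ballI)
    show "C \<subseteq> X" by (rule CX)
  next
    fix x y z assume x: "x \<in> C" and y: "y \<in> C" and z: "z \<in> nonneg_span {x, y} \<inter> X"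
    show "z \<in> C"
    proof (cases "x \<in> D")
      case True then show ?thesis using aux[OF True y] z by blast
    next
      case xnD: False
      show ?thesis
      proof (cases "y \<in> D")
        case True
        have "z \<in> nonneg_span {y, x}" using z by (simp add: insert_commute)
        then show ?thesis using aux[OF True x] z by blast
      next
        case False
        then have "x \<in> B" "y \<in> B" using x y xnD C_def by blast+
        then show ?thesis using H z by blast
      qed
    qed
  qed
  moreover have "B \<subseteq> C" unfolding C_def by blast
  moreover have "C \<inter> Q \<subseteq> B" unfolding C_def D_def by blast
  ultimately show ?thesis using CX by blast
qed



lemma lin2: "linear f \<Longrightarrow> f (a *\<^sub>R x + b *\<^sub>R y) = a * f x + b * (f y :: real)"
  by (simp add: linear_add linear_scale)

lemma fund_sym: "fundamental Y \<alpha> \<beta> \<Longrightarrow> fundamental Y \<beta> \<alpha>"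
  unfolding fundamental_def by (auto simp: insert_commute)

lemma two_dim_sub: "two_dim_linear_subset X Y \<Longrightarrow> Y \<subseteq> X"
  unfolding two_dim_linear_subset_def linear_subset_def by blast

lemma two_dim_zero: "two_dim_linear_subset X Y \<Longrightarrow> 0 \<in> X \<Longrightarrow> 0 \<in> Y"
  unfolding two_dim_linear_subset_def linear_subset_def by (auto simp: subspace_0)

lemma fund_nonzero: "fundamental Y \<alpha> \<beta> \<Longrightarrow> \<alpha> \<noteq> 0"
  unfolding fundamental_def using nn_zero by metis

lemma fund_before_zero1:
  assumes ord: "ordering_of X g K"
    and c1: "\<forall>Y \<alpha> \<beta>. two_dim_linear_subset X Y \<and> fundamental Y \<alpha> \<beta> \<longrightarrow>
        (\<forall>i\<in>K. \<forall>j\<in>K. g i \<in> {\<alpha>, \<beta>} \<and> g j \<in> Y - {\<alpha>, \<beta>} \<longrightarrow> i < j)"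
    and z: "g k0 = 0" "k0 \<in> K" and td: "two_dim_linear_subset X Y" and f: "fundamental Y \<alpha> \<beta>"
  shows "\<alpha> \<in> init_seg g k0"
proof -
  have aY: "\<alpha> \<in> Y" using f unfolding fundamental_def by blast
  then have "\<alpha> \<in> X" using two_dim_sub[OF td] by blast
  then obtain i where i: "i \<in> K" "\<alpha> = g i" using ord_img[OF ord] by blast
  have "g k0 \<in> g ` K" by (rule imageI[OF z(2)])
  then have X0: "0 \<in> X" using z(1) ord_img[OF ord] by simp
  have Y0: "0 \<in> Y" by (rule two_dim_zero[OF td X0])
  have "\<alpha> \<noteq> 0" by (rule fund_nonzero[OF f])
  moreover have "\<beta> \<noteq> 0" by (rule fund_nonzero[OF fund_sym[OF f]])
  ultimately have "g k0 \<in> Y - {\<alpha>, \<beta>}" using z Y0 by auto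
  then have "i < k0" using c1 td f i z(2) by blast
  then show ?thesis using i init_seg_mem by metis
qed

lemma interior:
  assumes ord: "ordering_of X g K"
    and c1: "\<forall>Y \<alpha> \<beta>. two_dim_linear_subset X Y \<and> fundamental Y \<alpha> \<beta> \<longrightarrow>
        (\<forall>i\<in>K. \<forall>j\<in>K. g i \<in> {\<alpha>, \<beta>} \<and> g j \<in> Y - {\<alpha>, \<beta>} \<longrightarrow> i < j)"
    and z: "g k0 = 0" "k0 \<in> K"
    and fund: "\<forall>Y. two_dim_linear_subset X Y \<longrightarrow> (\<exists>\<alpha> \<beta>. fundamental Y \<alpha> \<beta>)"
    and gX: "\<gamma> \<in> X" "\<gamma> \<notin> init_seg g k0" "\<gamma> \<noteq> 0" and vX: "v \<in> X" "v \<notin> span {\<gamma>}"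
  obtains \<alpha> \<beta> s t where "\<alpha> \<in> init_seg g k0" "\<beta> \<in> init_seg g k0" "s > 0" "t > 0"
    "\<gamma> = s *\<^sub>R \<alpha> + t *\<^sub>R \<beta>" "\<alpha> \<in> span {\<gamma>, v}" "\<beta> \<in> span {\<gamma>, v}" "v \<in> nonneg_span {\<alpha>, \<beta>}"
    "\<And>a b. a *\<^sub>R \<alpha> + b *\<^sub>R \<beta> = 0 \<Longrightarrow> a = 0 \<and> b = 0" "\<alpha> \<noteq> 0" "\<beta> \<noteq> 0"
proof -
  let ?Y = "X \<inter> span {\<gamma>, v}"
  have td: "two_dim_linear_subset X ?Y" by (rule two_dim_pair[OF gX(1) vX(1) gX(3) vX(2)])
  obtain \<alpha> \<beta> where f: "fundamental ?Y \<alpha> \<beta>" using fund td by blast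
  have aQ: "\<alpha> \<in> init_seg g k0" by (rule fund_before_zero1[OF ord c1 z td f])
  have bQ: "\<beta> \<in> init_seg g k0" by (rule fund_before_zero1[OF ord c1 z td fund_sym[OF f]])
  have sub: "?Y \<subseteq> nonneg_span {\<alpha>, \<beta>}" using f unfolding fundamental_def by blast
  have gY: "\<gamma> \<in> ?Y" using gX by (auto intro: span_base)
  have vY: "v \<in> ?Y" using vX by (auto intro: span_base)
  obtain s t where st: "0 \<le> s" "0 \<le> t" "\<gamma> = s *\<^sub>R \<alpha> + t *\<^sub>R \<beta>" using sub gY nn2 by blast
  have ga: "\<gamma> \<noteq> \<alpha>" using aQ gX(2) by blast
  have gb: "\<gamma> \<noteq> \<beta>" using bQ gX(2) by blast
  have s0: "s > 0"
  proof (rule ccontr)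
    assume "\<not> s > 0"
    then have "s = 0" using st by simp
    then have e: "\<gamma> = t *\<^sub>R \<beta>" using st by simp
    then have "t \<noteq> 0" using gX(3) by auto
    then have "\<beta> = (1/t) *\<^sub>R \<gamma>" using e by simp
    moreover have "(1/t) *\<^sub>R \<gamma> \<in> nonneg_span (?Y - {\<beta>})"
      by (rule nn_scale[OF nn_base]) (use gY gb st(2) in auto)
    ultimately show False using f unfolding fundamental_def by auto
  qed
  have t0: "t > 0"
  proof (rule ccontr)
    assume "\<not> t > 0"
    then have "t = 0" using st by simp
    then have e: "\<gamma> = s *\<^sub>R \<alpha>" using st by simp
    then have "s \<noteq> 0" using gX(3) by auto
    then have "\<alpha> = (1/s) *\<^sub>R \<gamma>" using e by simp
    moreover have "(1/s) *\<^sub>R \<gamma> \<in> nonneg_span (?Y - {\<alpha>})"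
      by (rule nn_scale[OF nn_base]) (use gY ga st(1) in auto)
    ultimately show False using f unfolding fundamental_def by auto
  qed
  have "\<alpha> \<in> ?Y" "\<beta> \<in> ?Y" using f unfolding fundamental_def by blast+
  moreover have "v \<in> nonneg_span {\<alpha>, \<beta>}" using sub vY by blast
  moreover have "\<And>a b. a *\<^sub>R \<alpha> + b *\<^sub>R \<beta> = 0 \<Longrightarrow> a = 0 \<and> b = 0"
    using fundamental_indep[OF td f] by blast
  moreover have "\<alpha> \<noteq> 0" "\<beta> \<noteq> 0" using fund_nonzero f fund_sym by blast+
  ultimately show ?thesis using that[OF aQ bQ s0 t0 st(3)] by blast
qed

lemma ratio_alg:
  fixes ha hb s t fa fb u w :: real
  assumes "ha > 0" "hb < 0" "s > 0" "t > 0" "s*ha + t*hb = 0" "s*fa + t*fb = 1"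
    "u \<ge> 0" "w \<ge> 0" "u*ha + w*hb < 0"
  shows "(u*fa + w*fb) / (u*ha + w*hb) < fa / ha"
proof -
  have e1: "s*ha = - (t*hb)" using assms(5) by linarith
  have "ha = ha * (s*fa + t*fb)" using assms(6) by simp
  also have "\<dots> = (s*ha)*fa + t*(ha*fb)" by (simp add: algebra_simps)
  also have "\<dots> = t*(ha*fb - hb*fa)" using e1 by (simp add: algebra_simps)
  finally have k: "t*(ha*fb - hb*fa) = ha" by simp
  have "0 < t * (ha*fb - hb*fa)" using k assms(1) by simp
  then have d: "ha*fb - hb*fa > 0" using zero_less_mult_pos assms(4) by blast
  have w0: "w > 0"
  proof (rule ccontr)
    assume "\<not> w > 0"
    then have "w = 0" using assms(8) by simp
    then have "u*ha < 0" using assms(9) by simp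
    moreover have "u*ha \<ge> 0" using assms(1,7) by simp
    ultimately show False by simp
  qed
  define hv where "hv = u*ha + w*hb"
  define fv where "fv = u*fa + w*fb"
  have hv: "hv < 0" using assms(9) hv_def by simp
  have num: "fa*hv - fv*ha = - (w*(ha*fb - hb*fa))" unfolding hv_def fv_def by (simp add: algebra_simps)
  have numneg: "fa*hv - fv*ha < 0" unfolding num using w0 d by simp
  have den: "ha*hv < 0" using assms(1) hv by (simp add: mult_pos_neg)
  have "fa/ha - fv/hv = (fa*hv - fv*ha)/(ha*hv)" using assms(1) hv by (simp add: field_simps)
  also have "\<dots> > 0" using numneg den by (simp add: divide_neg_neg)
  finally show ?thesis unfolding hv_def[symmetric] fv_def[symmetric] by simp
qed



lemma span2_lin:
  assumes "linear f" "\<alpha> \<in> span {a, b}"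
  obtains c d where "\<alpha> = c *\<^sub>R a + d *\<^sub>R b" "f \<alpha> = c * f a + d * (f b :: real)"
  using assms span2 lin2 by metis

lemma slope:
  assumes ord: "ordering_of X g K"
    and c1: "\<forall>Y \<alpha> \<beta>. two_dim_linear_subset X Y \<and> fundamental Y \<alpha> \<beta> \<longrightarrow>
        (\<forall>i\<in>K. \<forall>j\<in>K. g i \<in> {\<alpha>, \<beta>} \<and> g j \<in> Y - {\<alpha>, \<beta>} \<longrightarrow> i < j)"
    and z: "g k0 = 0" "k0 \<in> K"
    and fund: "\<forall>Y. two_dim_linear_subset X Y \<longrightarrow> (\<exists>\<alpha> \<beta>. fundamental Y \<alpha> \<beta>)"
    and w1: "w1 \<in> X" "w1 \<notin> init_seg g k0" "w1 \<noteq> 0"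
    and w2: "w2 \<in> X" "w2 \<notin> init_seg g k0" "w2 \<noteq> 0" "w2 \<notin> span {w1}"
    and xX: "x \<in> X"
  shows "x \<in> span {w1, w2}"
proof (rule ccontr)
  assume xn: "x \<notin> span {w1, w2}"
  let ?Q = "init_seg g k0"
  have QK: "{..<k0} \<subseteq> K" using ord_down[OF ord z(2)] by blast
  have QX: "?Q \<subseteq> X" by (rule init_seg_X[OF ord QK])
  have i1: "independent {w1}" by (rule independent_insertI) (use w1 in \<open>auto simp: independent_empty\<close>)
  have i2: "independent (insert w2 {w1})" by (rule independent_insertI[OF w2(4) i1])
  have xn': "x \<notin> span (insert w2 {w1})" using xn by (simp add: insert_commute)
  have i3: "independent (insert x (insert w2 {w1}))" by (rule independent_insertI[OF xn' i2])
  have d12: "w2 \<noteq> w1" using w2(4) by (auto intro: span_base)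
  have dx1: "x \<noteq> w1" using xn by (auto intro: span_base)
  have dx2: "x \<noteq> w2" using xn by (auto intro: span_base)
  obtain Fl :: "'a \<Rightarrow> real" where Fl: "linear Fl" "\<forall>v\<in>insert x (insert w2 {w1}). Fl v = (if v = w1 then 1 else 0)"
    using linear_independent_extend[OF i3, of "\<lambda>v. if v = w1 then 1 else (0::real)"] by blast
  obtain Hl :: "'a \<Rightarrow> real" where Hl: "linear Hl" "\<forall>v\<in>insert x (insert w2 {w1}). Hl v = (if v = x then 1 else 0)"
    using linear_independent_extend[OF i3, of "\<lambda>v. if v = x then 1 else (0::real)"] by blast
  have F1: "Fl w1 = 1" and F2: "Fl w2 = 0" using Fl(2) d12 by auto
  have H1: "Hl w1 = 0" and H2: "Hl w2 = 0" and Hx: "Hl x = 1" using Hl(2) dx1 dx2 by auto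
  define r where "r p = Fl p / Hl p" for p
  have nspan: "p \<notin> span {w}" if "Hl w = 0" "Hl p \<noteq> 0" for p w
  proof
    assume "p \<in> span {w}"
    then obtain c where "p = c *\<^sub>R w" by (auto simp: span_singleton)
    then have "Hl p = c * Hl w" using Hl(1) by (simp add: linear_scale)
    then show False using that by simp
  qed
  have Cq: "\<exists>p'\<in>?Q. Hl p' < 0 \<and> r p' = r p" if pX: "p \<in> X" and pH: "Hl p > 0" for p
  proof -
    have pn: "p \<notin> span {w2}" using nspan[OF H2] pH by simp
    obtain \<alpha> \<beta> s t where ab: "\<alpha> \<in> ?Q" "\<beta> \<in> ?Q" "s > 0" "t > 0"
      "w2 = s *\<^sub>R \<alpha> + t *\<^sub>R \<beta>" "\<alpha> \<in> span {w2, p}" "\<beta> \<in> span {w2, p}"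
      "\<And>a b. a *\<^sub>R \<alpha> + b *\<^sub>R \<beta> = 0 \<Longrightarrow> a = 0 \<and> b = 0" "\<alpha> \<noteq> 0"
      using interior[OF ord c1 z fund w2(1,2,3) pX pn] by metis
    obtain a1 b1 where A: "\<alpha> = a1 *\<^sub>R w2 + b1 *\<^sub>R p" "Hl \<alpha> = a1 * Hl w2 + b1 * Hl p"
      using span2_lin[OF Hl(1) ab(6)] by metis
    obtain a2 b2 where B: "\<beta> = a2 *\<^sub>R w2 + b2 *\<^sub>R p" "Hl \<beta> = a2 * Hl w2 + b2 * Hl p"
      using span2_lin[OF Hl(1) ab(7)] by metis
    have FA: "Fl \<alpha> = b1 * Fl p" using A(1) lin2[OF Fl(1)] F2 by simp
    have FB: "Fl \<beta> = b2 * Fl p" using B(1) lin2[OF Fl(1)] F2 by simp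
    have "0 = s * Hl \<alpha> + t * Hl \<beta>" using H2 ab(5) lin2[OF Hl(1)] by metis
    then have "(s * b1 + t * b2) * Hl p = 0" using A(2) B(2) H2 by (simp add: algebra_simps)
    then have sb: "s * b1 + t * b2 = 0" using pH by simp
    have b1n: "b1 \<noteq> 0"
    proof
      assume "b1 = 0"
      then have "b2 = 0" using sb ab(4) by simp
      then have "a2 *\<^sub>R \<alpha> + (- a1) *\<^sub>R \<beta> = 0" using A(1) B(1) \<open>b1 = 0\<close> by simp
      then have "a2 = 0 \<and> - a1 = 0" using ab(8) by blast
      then have "\<alpha> = 0" using A(1) \<open>b1 = 0\<close> by simp
      then show False using ab(9) by simp
    qed
    show ?thesis
    proof (cases "b1 < 0")
      case True
      have "Hl \<alpha> < 0" using A(2) H2 True pH by (simp add: mult_neg_pos)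
      moreover have "r \<alpha> = r p" unfolding r_def FA A(2) H2 using b1n by simp
      ultimately show ?thesis using ab(1) by blast
    next
      case False
      then have "b1 > 0" using b1n by simp
      then have "t * b2 < 0" using sb ab(3) by (smt (verit) mult_pos_pos)
      then have "b2 < 0" using ab(4) by (simp add: mult_less_0_iff)
      then have "Hl \<beta> < 0" using B(2) H2 pH by (simp add: mult_neg_pos)
      moreover have "r \<beta> = r p" unfolding r_def FB B(2) H2 using \<open>b2 < 0\<close> by simp
      ultimately show ?thesis using ab(2) by blast
    qed
  qed
  have R: "\<exists>p'\<in>?Q. Hl p' > 0 \<and> r p' > r v" if vX: "v \<in> X" and vH: "Hl v < 0" for v
  proof -
    have vn: "v \<notin> span {w1}" using nspan[OF H1] vH by simp
    obtain \<alpha> \<beta> s t where ab: "\<alpha> \<in> ?Q" "\<beta> \<in> ?Q" "s > 0" "t > 0"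
      "w1 = s *\<^sub>R \<alpha> + t *\<^sub>R \<beta>" "\<alpha> \<in> span {w1, v}" "\<beta> \<in> span {w1, v}"
      "v \<in> nonneg_span {\<alpha>, \<beta>}"
      "\<And>a b. a *\<^sub>R \<alpha> + b *\<^sub>R \<beta> = 0 \<Longrightarrow> a = 0 \<and> b = 0" "\<alpha> \<noteq> 0"
      using interior[OF ord c1 z fund w1(1,2,3) vX vn] by metis
    obtain a1 b1 where A: "\<alpha> = a1 *\<^sub>R w1 + b1 *\<^sub>R v" "Hl \<alpha> = a1 * Hl w1 + b1 * Hl v"
      using span2_lin[OF Hl(1) ab(6)] by metis
    obtain a2 b2 where B: "\<beta> = a2 *\<^sub>R w1 + b2 *\<^sub>R v" "Hl \<beta> = a2 * Hl w1 + b2 * Hl v"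
      using span2_lin[OF Hl(1) ab(7)] by metis
    obtain u w where uw: "0 \<le> u" "0 \<le> w" "v = u *\<^sub>R \<alpha> + w *\<^sub>R \<beta>" using ab(8) nn2 by blast
    have hv: "Hl v = u * Hl \<alpha> + w * Hl \<beta>" using uw(3) lin2[OF Hl(1)] by metis
    have fv: "Fl v = u * Fl \<alpha> + w * Fl \<beta>" using uw(3) lin2[OF Fl(1)] by metis
    have h0: "s * Hl \<alpha> + t * Hl \<beta> = 0" using H1 ab(5) lin2[OF Hl(1)] by metis
    have f1: "s * Fl \<alpha> + t * Fl \<beta> = 1" using F1 ab(5) lin2[OF Fl(1)] by metis
    have Ha: "Hl \<alpha> \<noteq> 0"
    proof
      assume "Hl \<alpha> = 0"
      then have "b1 = 0" using A(2) H1 vH by simp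
      have "Hl \<beta> = 0" using h0 \<open>Hl \<alpha> = 0\<close> ab(4) by simp
      then have "b2 = 0" using B(2) H1 vH by simp
      then have "a2 *\<^sub>R \<alpha> + (- a1) *\<^sub>R \<beta> = 0" using A(1) B(1) \<open>b1 = 0\<close> by simp
      then have "a2 = 0 \<and> - a1 = 0" using ab(9) by blast
      then have "\<alpha> = 0" using A(1) \<open>b1 = 0\<close> by simp
      then show False using ab(10) by simp
    qed
    show ?thesis
    proof (cases "Hl \<alpha> > 0")
      case True
      then have "t * Hl \<beta> < 0" using h0 ab(3) by (smt (verit) mult_pos_pos)
      then have hb: "Hl \<beta> < 0" using ab(4) by (simp add: mult_less_0_iff)
      have "(u * Fl \<alpha> + w * Fl \<beta>) / (u * Hl \<alpha> + w * Hl \<beta>) < Fl \<alpha> / Hl \<alpha>"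
        by (rule ratio_alg[OF True hb ab(3,4) h0 f1 uw(1,2)]) (use hv vH in simp)
      then have "r v < r \<alpha>" unfolding r_def hv fv .
      then show ?thesis using ab(1) True by blast
    next
      case False
      then have ha: "Hl \<alpha> < 0" using Ha by simp
      then have "s * Hl \<alpha> < 0" using ab(3) by (simp add: mult_pos_neg)
      then have "t * Hl \<beta> > 0" using h0 by simp
      then have hb: "Hl \<beta> > 0" using ab(4) by (simp add: zero_less_mult_iff)
      have h0': "t * Hl \<beta> + s * Hl \<alpha> = 0" using h0 by simp
      have f1': "t * Fl \<beta> + s * Fl \<alpha> = 1" using f1 by simp
      have "(w * Fl \<beta> + u * Fl \<alpha>) / (w * Hl \<beta> + u * Hl \<alpha>) < Fl \<beta> / Hl \<beta>"
        by (rule ratio_alg[OF hb ha ab(4,3) h0' f1' uw(2,1)]) (use hv vH in simp)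
      then have "r v < r \<beta>" unfolding r_def hv fv by (simp add: add.commute)
      then show ?thesis using ab(2) hb by blast
    qed
  qed
  define S where "S = {p \<in> ?Q. Hl p > 0}"
  have finS: "finite S" unfolding S_def by (rule finite_subset[OF _ finite_init_seg[of g k0]]) auto
  obtain v0 where v0: "v0 \<in> ?Q" "Hl v0 < 0" "r v0 = r x" using Cq[OF xX] Hx by auto
  obtain p0 where "p0 \<in> ?Q" "Hl p0 > 0" using R[of v0] v0 QX by blast
  then have neS: "S \<noteq> {}" unfolding S_def by blast
  define M where "M = Max (r ` S)"
  have "M \<in> r ` S" unfolding M_def using finS neS by (intro Max_in) auto
  then obtain p where p: "p \<in> S" "r p = M" by blast
  obtain v where v: "v \<in> ?Q" "Hl v < 0" "r v = r p" using Cq[of p] p(1) QX unfolding S_def by blast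
  obtain p' where p': "p' \<in> ?Q" "Hl p' > 0" "r p' > r v" using R[of v] v QX by blast
  have "p' \<in> S" using p' unfolding S_def by blast
  then have "r p' \<le> M" unfolding M_def using finS by (intro Max_ge) auto
  then show False using p' v p by simp
qed

lemma caseC2:
  assumes ord: "ordering_of X g K"
    and c1: "\<forall>Y \<alpha> \<beta>. two_dim_linear_subset X Y \<and> fundamental Y \<alpha> \<beta> \<longrightarrow>
        (\<forall>i\<in>K. \<forall>j\<in>K. g i \<in> {\<alpha>, \<beta>} \<and> g j \<in> Y - {\<alpha>, \<beta>} \<longrightarrow> i < j)"
    and z: "g k0 = 0" "k0 \<in> K"
    and fund: "\<forall>Y. two_dim_linear_subset X Y \<longrightarrow> (\<exists>\<alpha> \<beta>. fundamental Y \<alpha> \<beta>)"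
    and cl3: "clean3 X (init_seg g k0)" and bic: "biclosed_sub (init_seg g k0) B"
    and w1: "w1 \<in> X" "w1 \<notin> init_seg g k0" "w1 \<noteq> 0"
    and w2: "w2 \<in> X" "w2 \<notin> init_seg g k0" "w2 \<noteq> 0" "w2 \<notin> span {w1}"
  shows "\<exists>C. C \<subseteq> X \<and> closed_sub X C \<and> B \<subseteq> C \<and> C \<inter> init_seg g k0 \<subseteq> B"
proof -
  let ?Q = "init_seg g k0"
  have QK: "{..<k0} \<subseteq> K" using ord_down[OF ord z(2)] by blast
  have QX: "?Q \<subseteq> X" by (rule init_seg_X[OF ord QK])
  have Q0: "0 \<notin> ?Q" using not_in_init_seg[OF ord z(2) QK] z(1) by simp
  have BQ: "B \<subseteq> ?Q" using bic by (rule biclosed_sub_subset)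
  have XS: "X \<subseteq> span {w1, w2}" using slope[OF ord c1 z fund w1 w2] by blast
  have td: "two_dim_linear_subset X (X \<inter> span {w1, w2})" by (rule two_dim_pair[OF w1(1) w2(1) w1(3) w2(4)])
  obtain \<rho> \<sigma> where f: "fundamental (X \<inter> span {w1, w2}) \<rho> \<sigma>" using fund td by blast
  have rQ: "\<rho> \<in> ?Q" by (rule fund_before_zero1[OF ord c1 z td f])
  have sQ: "\<sigma> \<in> ?Q" by (rule fund_before_zero1[OF ord c1 z td fund_sym[OF f]])
  obtain F where F: "full X F" "\<rho> \<in> F" "\<sigma> \<in> F" "clean (F \<inter> ?Q)"
    using clean3D[OF cl3 rQ sQ rQ] by blast
  have XF: "X \<subseteq> F"
  proof
    fix y assume yX: "y \<in> X"
    then have "y \<in> X \<inter> span {w1, w2}" using XS by blast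
    then have "y \<in> nonneg_span {\<rho>, \<sigma>}" using f unfolding fundamental_def by blast
    then show "y \<in> F" using full_in[OF F(1) F(2) F(3) yX] nn2_span by blast
  qed
  have "F \<inter> ?Q = ?Q" using XF QX by blast
  then have "clean ?Q" using F(4) by simp
  then have ws: "weakly_separable ?Q B" using cleanD BQ bic by blast
  define C where "C = X \<inter> nonneg_span B"
  have "closed_sub X C" unfolding closed_sub_def C_def
    using nn2_sub by blast
  moreover have "B \<subseteq> C" unfolding C_def using BQ QX nn_base by blast
  moreover have "C \<inter> ?Q \<subseteq> B"
  proof
    fix y assume y: "y \<in> C \<inter> ?Q"
    show "y \<in> B"
    proof (rule ccontr)
      assume "y \<notin> B"
      then have "y \<in> nonneg_span (?Q - B)" using y by (intro nn_base) blast
      moreover have "y \<in> nonneg_span B" using y C_def by blast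
      ultimately have "y = 0" using ws unfolding weakly_separable_def by blast
      then show False using y Q0 by blast
    qed
  qed
  moreover have "C \<subseteq> X" unfolding C_def by blast
  ultimately show ?thesis by blast
qed



theorem proposition3p2:
  fixes X :: "'a::euclidean_space set" and g :: "nat \<Rightarrow> 'a" and K :: "nat set"
    and m :: nat and U :: "'a set"
  assumes "ordering_of X g K"
    and "countable X"
    and "\<forall>Y. two_dim_linear_subset X Y \<longrightarrow> (\<exists>\<alpha> \<beta>. fundamental Y \<alpha> \<beta>)"
    and "suitable X g K"
    and "{..<m} \<subseteq> K"
    and "biclosed_sub (init_seg g m) U"
  shows "closure_in X U \<inter> init_seg g m = U"
proof -
  note ord = assms(1) and fund = assms(3) and suit = assms(4) and mK = assms(5) and bic = assms(6)
  have c1: "\<forall>Y \<alpha> \<beta>. two_dim_linear_subset X Y \<and> fundamental Y \<alpha> \<beta> \<longrightarrow>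
        (\<forall>i\<in>K. \<forall>j\<in>K. g i \<in> {\<alpha>, \<beta>} \<and> g j \<in> Y - {\<alpha>, \<beta>} \<longrightarrow> i < j)"
    using suit unfolding suitable_def by blast
  have UXm: "U \<subseteq> init_seg g m" using bic by (rule biclosed_sub_subset)
  have XmX: "init_seg g m \<subseteq> X" by (rule init_seg_X[OF ord mK])
  have key: "\<exists>C. C \<subseteq> X \<and> closed_sub X C \<and> U \<subseteq> C \<and> C \<inter> init_seg g m \<subseteq> U"
  proof (cases "0 \<in> init_seg g m")
    case True
    then show ?thesis by (rule caseB[OF bic _ XmX])
  next
    case Xm0: False
    show ?thesis
    proof (cases "0 \<in> X")
      case False
      then show ?thesis by (rule caseA[OF ord fund suit mK bic])
    next
      case True
      then obtain k0 where k0: "k0 \<in> K" "g k0 = 0" using ord_img[OF ord] by (metis imageE)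
      have mk: "m \<le> k0"
      proof (rule ccontr)
        assume "\<not> m \<le> k0"
        then have "g k0 \<in> init_seg g m" by (intro init_seg_mem) simp
        then show False using Xm0 k0 by simp
      qed
      have QK: "{..<k0} \<subseteq> K" using ord_down[OF ord k0(1)] by blast
      define n0 where "n0 = k0 - m"
      have mn: "m + n0 = k0" using mk n0_def by simp
      have Q0: "0 \<notin> init_seg g k0" using not_in_init_seg[OF ord k0(1) QK] k0(2) by simp
      have inv: "biclosed_sub (init_seg g k0) (chain g m U n0) \<and> chain g m U n0 \<inter> init_seg g m = U"
        using chain_inv[OF ord fund suit mK bic, of n0] QK Q0 mn by simp
      define B where "B = chain g m U n0"
      have bicB: "biclosed_sub (init_seg g k0) B" and BU: "B \<inter> init_seg g m = U" using inv B_def by auto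
      have cl3: "clean3 X (init_seg g k0)" by (rule suitable_clean3[OF suit QK])
      have QX: "init_seg g k0 \<subseteq> X" by (rule init_seg_X[OF ord QK])
      have XmQ: "init_seg g m \<subseteq> init_seg g k0" by (rule init_seg_mono[OF mk])
      have ex: "\<exists>C. C \<subseteq> X \<and> closed_sub X C \<and> B \<subseteq> C \<and> C \<inter> init_seg g k0 \<subseteq> B"
      proof (cases "\<exists>w1 w2. w1 \<in> X \<and> w1 \<notin> init_seg g k0 \<and> w1 \<noteq> 0 \<and>
                            w2 \<in> X \<and> w2 \<notin> init_seg g k0 \<and> w2 \<noteq> 0 \<and> w2 \<notin> span {w1}")
        case True
        then obtain w1 w2 where w: "w1 \<in> X" "w1 \<notin> init_seg g k0" "w1 \<noteq> 0"
          "w2 \<in> X" "w2 \<notin> init_seg g k0" "w2 \<noteq> 0" "w2 \<notin> span {w1}" by blast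
        show ?thesis by (rule caseC2[OF ord c1 k0(2,1) fund cl3 bicB w])
      next
        case False
        then have par: "\<forall>w1\<in>X - init_seg g k0. \<forall>w2\<in>X - init_seg g k0. w1 \<noteq> 0 \<longrightarrow> w2 \<noteq> 0 \<longrightarrow> w2 \<in> span {w1}"
          by blast
        show ?thesis by (rule caseC1[OF cl3 QX Q0 bicB par])
      qed
      then obtain C where C: "C \<subseteq> X" "closed_sub X C" "B \<subseteq> C" "C \<inter> init_seg g k0 \<subseteq> B" by blast
      have "U \<subseteq> C" using BU C(3) by blast
      moreover have "C \<inter> init_seg g m \<subseteq> U" using C(4) XmQ BU by blast
      ultimately show ?thesis using C(1,2) by blast
    qed
  qed
  then obtain C where C: "C \<subseteq> X" "closed_sub X C" "U \<subseteq> C" "C \<inter> init_seg g m \<subseteq> U" by blast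
  have "closure_in X U \<subseteq> C" unfolding closure_in_def using C(1,2,3) by blast
  moreover have "U \<subseteq> closure_in X U" unfolding closure_in_def by blast
  ultimately show ?thesis using C(4) UXm by blast
qed

end
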